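(* Let $\Gamma,T,\ast$ and $W$ be as in the context. Then $W$ has no non-stationary closed paths; that is, there is no sequence of $p$-cells $\sigma_0,\sigma_1,\dots,\sigma_r$ of $\mathcal{UD}^n\Gamma$ with $\sigma_r=\sigma_0$, $\sigma_1\ne\sigma_0$, such that for each $i$, if $W(\sigma_i)$ is undefined then $\sigma_{i+1}=\sigma_i$, and otherwise $\sigma_{i+1}\neq\sigma_i$ and $\sigma_{i+1}$ is a face of $W(\sigma_i)$. Consequently $W$ is a discrete gradient vector field on $\mathcal{UD}^n\Gamma$.
   Context: $\Gamma$ is a finite connected graph and $n\ge1$; $d(v)$ is the degree of $v$. $\mathcal{UD}^n\Gamma$ is the cell complex whose cells are unordered $n$-element sets $c=\{c_1,\dots,c_n\}$ where each $c_i$ is a vertex or an edge of $\Gamma$ and the closed sets $c_i$ are pairwise disjoint; the dimension of $c$ is the number of edges in it, and faces are obtained by replacing edges by endpoints. Fix a maximal tree $T$ of $\Gamma$ and a vertex $\ast$ of degree $1$ in $T$. For vertices $v_1,v_2$, $v_1\wedge v_2$ is the endpoint other than $\ast$ of $[\ast,v_1]\cap[\ast,v_2]$ (geodesics in $T$), or $\ast$ if this is $\{\ast\}$. Directions (edges) at each vertex $v$ are labelled $0,\dots,d(v)-1$, label $0$ for the edge of $T$ towards $\ast$ (the direction from $\ast$ in $T$ gets label $1$); $g(v_1,v_2)$ is the label of the direction from $v_1$ on the $T$-geodesic to $v_2$, and $g(v,v)=0$. Order: $v_1\le v_2$ iff, with $v_3=v_1\wedge v_2$, $v_3=v_1$ or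 ($v_3\ne v_1$ and $g(v_3,v_1)<g(v_3,v_2)$); this is a linear order. For an edge $e$, $\iota(e)\ge\tau(e)$ are its endpoints; for $v\ne\ast$, $e(v)$ is the edge of $T$ at $v$ in direction $0$. A vertex $v\neq\ast$ of a cell $c$ is unblocked in $c$ if $e(v)$ is disjoint from every element of $c$ other than $v$; then the elementary reduction of $c$ from $v$ replaces $v$ by $e(v)$. Otherwise (and always for $v=\ast$) $v$ is blocked. The principal reduction of $c$ is the elementary reduction from the smallest unblocked vertex of $c$ (if any). Define $W$: for a $0$-cell $c$, $W(c)$ is its principal reduction if it exists; for $i>0$ and an $i$-cell $c$, $W(c)$ is its principal reduction if this exists and $c$ is not in the image of $W$ on $(i-1)$-cells; otherwise undefined. A discrete gradient vector field is an injective such assignment $W$ (from $i$-cells to $(i+1)$-cells having them as regular faces, with image and domain disjoint) admitting no non-stationary closed paths. *)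

theory Defs
  imports Main
begin

record ('v, 'e) graph =
  verts :: "'v set"
  edges :: "'e set"
  src   :: "'e \<Rightarrow> 'v"
  tgt   :: "'e \<Rightarrow> 'v"

definition wf_graph :: "('v,'e) graph \<Rightarrow> bool" where
  "wf_graph G \<longleftrightarrow> finite (verts G) \<and> finite (edges G) \<and>
     (\<forall>e\<in>edges G. src G e \<in> verts G \<and> tgt G e \<in> verts G)"

definition adj :: "('v,'e) graph \<Rightarrow> 'e set \<Rightarrow> 'v \<Rightarrow> 'v \<Rightarrow> bool" where
  "adj G F u w \<longleftrightarrow> (\<exists>e\<in>F. (src G e = u \<and> tgt G e = w) \<or> (src G e = w \<and> tgt G e = u))"

definition vwalk :: "('v,'e) graph \<Rightarrow> 'e set \<Rightarrow> 'v list \<Rightarrow> bool" where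
  "vwalk G F xs \<longleftrightarrow> xs \<noteq> [] \<and> successively (adj G F) xs"

definition connected_by :: "('v,'e) graph \<Rightarrow> 'e set \<Rightarrow> bool" where
  "connected_by G F \<longleftrightarrow> (\<forall>u\<in>verts G. \<forall>w\<in>verts G.
      \<exists>xs. vwalk G F xs \<and> hd xs = u \<and> last xs = w)"

definition connected_graph :: "('v,'e) graph \<Rightarrow> bool" where
  "connected_graph G \<longleftrightarrow> connected_by G (edges G)"

definition epath :: "('v,'e) graph \<Rightarrow> 'e set \<Rightarrow> 'v list \<Rightarrow> 'e list \<Rightarrow> bool" where
  "epath G F vs es \<longleftrightarrow> length vs = Suc (length es) \<and>
     (\<forall>i<length es. es!i \<in> F \<and>
        ((src G (es!i) = vs!i \<and> tgt G (es!i) = vs!Suc i) \<or>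
         (src G (es!i) = vs!Suc i \<and> tgt G (es!i) = vs!i)))"

text \<open>F has no cycle (closed trail with at least one edge; loops and
  parallel edges are cycles).\<close>
definition acyclic_edges :: "('v,'e) graph \<Rightarrow> 'e set \<Rightarrow> bool" where
  "acyclic_edges G F \<longleftrightarrow> \<not> (\<exists>vs es. epath G F vs es \<and> es \<noteq> [] \<and> distinct es \<and> hd vs = last vs)"

definition spanning_tree :: "('v,'e) graph \<Rightarrow> 'e set \<Rightarrow> bool" where
  "spanning_tree G T \<longleftrightarrow> T \<subseteq> edges G \<and> acyclic_edges G T \<and> connected_by G T"

definition tdegree :: "('v,'e) graph \<Rightarrow> 'e set \<Rightarrow> 'v \<Rightarrow> nat" where
  "tdegree G T v = card {e\<in>T. src G e = v \<or> tgt G e = v}"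

text \<open>Directions (half-edges) at v: (e,True) is e at src e, (e,False) is e at tgt e.
  A loop gives two directions.\<close>
definition dirs :: "('v,'e) graph \<Rightarrow> 'v \<Rightarrow> ('e \<times> bool) set" where
  "dirs G v = {(e,b). e \<in> edges G \<and> (if b then src G e else tgt G e) = v}"

definition deg :: "('v,'e) graph \<Rightarrow> 'v \<Rightarrow> nat" where
  "deg G v = card (dirs G v)"

text \<open>the direction of a non-loop edge e at its endpoint v\<close>
definition hdir :: "('v,'e) graph \<Rightarrow> 'e \<Rightarrow> 'v \<Rightarrow> 'e \<times> bool" where
  "hdir G e v = (e, src G e = v)"

definition tgeo :: "('v,'e) graph \<Rightarrow> 'e set \<Rightarrow> 'v \<Rightarrow> 'v \<Rightarrow> 'v list" where
  "tgeo G T a b = (THE xs. vwalk G T xs \<and> distinct xs \<and> hd xs = a \<and> last xs = b)"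

definition tedge :: "('v,'e) graph \<Rightarrow> 'e set \<Rightarrow> 'v \<Rightarrow> 'v \<Rightarrow> 'e" where
  "tedge G T a b = (THE e. e \<in> T \<and> ((src G e = a \<and> tgt G e = b) \<or> (src G e = b \<and> tgt G e = a)))"

definition edown :: "('v,'e) graph \<Rightarrow> 'e set \<Rightarrow> 'v \<Rightarrow> 'v \<Rightarrow> 'e" where
  "edown G T s v = tedge G T v (tgeo G T v s ! 1)"

definition gdir :: "('v,'e) graph \<Rightarrow> 'e set \<Rightarrow> ('v \<Rightarrow> 'e \<times> bool \<Rightarrow> nat) \<Rightarrow> 'v \<Rightarrow> 'v \<Rightarrow> nat" where
  "gdir G T lab v1 v2 = (if v1 = v2 then 0
      else lab v1 (hdir G (tedge G T v1 (tgeo G T v1 v2 ! 1)) v1))"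

text \<open>v1 \<and> v2: last vertex of [s,v1] \<inter> [s,v2] (which is an initial segment of [s,v1])\<close>
definition meet :: "('v,'e) graph \<Rightarrow> 'e set \<Rightarrow> 'v \<Rightarrow> 'v \<Rightarrow> 'v \<Rightarrow> 'v" where
  "meet G T s v1 v2 = last (filter (\<lambda>x. x \<in> set (tgeo G T s v2)) (tgeo G T s v1))"

definition vle :: "('v,'e) graph \<Rightarrow> 'e set \<Rightarrow> 'v \<Rightarrow> ('v \<Rightarrow> 'e \<times> bool \<Rightarrow> nat) \<Rightarrow> 'v \<Rightarrow> 'v \<Rightarrow> bool" where
  "vle G T s lab v1 v2 = (let v3 = meet G T s v1 v2 in
      v3 = v1 \<or> (v3 \<noteq> v1 \<and> gdir G T lab v3 v1 < gdir G T lab v3 v2))"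

definition good_labelling :: "('v,'e) graph \<Rightarrow> 'e set \<Rightarrow> 'v \<Rightarrow> ('v \<Rightarrow> 'e \<times> bool \<Rightarrow> nat) \<Rightarrow> bool" where
  "good_labelling G T s lab \<longleftrightarrow>
     (\<forall>v\<in>verts G. bij_betw (lab v) (dirs G v) {..<deg G v}) \<and>
     (\<forall>v\<in>verts G - {s}. lab v (hdir G (edown G T s v) v) = 0)"

type_synonym ('v,'e) cell = "('v + 'e) set"

text \<open>closed set of a vertex/edge, recorded by its vertices (distinct edges have
  disjoint interiors)\<close>
definition cl :: "('v,'e) graph \<Rightarrow> 'v + 'e \<Rightarrow> 'v set" where
  "cl G x = (case x of Inl v \<Rightarrow> {v} | Inr e \<Rightarrow> {src G e, tgt G e})"

definition is_cell :: "('v,'e) graph \<Rightarrow> nat \<Rightarrow> ('v,'e) cell \<Rightarrow> bool" where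
  "is_cell G n c \<longleftrightarrow> finite c \<and> card c = n \<and>
     (\<forall>x\<in>c. case x of Inl v \<Rightarrow> v \<in> verts G | Inr e \<Rightarrow> e \<in> edges G) \<and>
     pairwise (\<lambda>x y. cl G x \<inter> cl G y = {}) c"

definition cdim :: "('v,'e) cell \<Rightarrow> nat" where
  "cdim c = card {e. Inr e \<in> c}"

definition face :: "('v,'e) graph \<Rightarrow> ('v,'e) cell \<Rightarrow> ('v,'e) cell \<Rightarrow> bool" where
  "face G c' c \<longleftrightarrow> (\<exists>f. (\<forall>x\<in>c. case x of Inl v \<Rightarrow> f x = x
        | Inr e \<Rightarrow> f x \<in> {x, Inl (src G e), Inl (tgt G e)}) \<and> c' = f ` c)"

definition regular_face :: "('v,'e) graph \<Rightarrow> ('v,'e) cell \<Rightarrow> ('v,'e) cell \<Rightarrow> bool" where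
  "regular_face G c' c \<longleftrightarrow> (\<exists>e. Inr e \<in> c \<and> src G e \<noteq> tgt G e \<and>
      (\<exists>u\<in>{src G e, tgt G e}. c' = insert (Inl u) (c - {Inr e})))"

definition unblocked :: "('v,'e) graph \<Rightarrow> 'e set \<Rightarrow> 'v \<Rightarrow> ('v,'e) cell \<Rightarrow> 'v \<Rightarrow> bool" where
  "unblocked G T s c v \<longleftrightarrow> Inl v \<in> c \<and> v \<noteq> s \<and>
     (\<forall>x\<in>c. x \<noteq> Inl v \<longrightarrow> cl G (Inr (edown G T s v)) \<inter> cl G x = {})"

definition elem_red :: "('v,'e) graph \<Rightarrow> 'e set \<Rightarrow> 'v \<Rightarrow> ('v,'e) cell \<Rightarrow> 'v \<Rightarrow> ('v,'e) cell" where
  "elem_red G T s c v = insert (Inr (edown G T s v)) (c - {Inl v})"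

definition principal_red ::
  "('v,'e) graph \<Rightarrow> 'e set \<Rightarrow> 'v \<Rightarrow> ('v \<Rightarrow> 'e \<times> bool \<Rightarrow> nat) \<Rightarrow> ('v,'e) cell \<Rightarrow> ('v,'e) cell option" where
  "principal_red G T s lab c =
     (if \<exists>v. unblocked G T s c v
      then Some (elem_red G T s c
              (THE v. unblocked G T s c v \<and> (\<forall>w. unblocked G T s c w \<longrightarrow> vle G T s lab v w)))
      else None)"

fun Wdim :: "('v,'e) graph \<Rightarrow> nat \<Rightarrow> 'e set \<Rightarrow> 'v \<Rightarrow> ('v \<Rightarrow> 'e \<times> bool \<Rightarrow> nat) \<Rightarrow>
    nat \<Rightarrow> ('v,'e) cell \<Rightarrow> ('v,'e) cell option" where
  "Wdim G n T s lab 0 c = principal_red G T s lab c"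
| "Wdim G n T s lab (Suc i) c =
     (if \<exists>c'. is_cell G n c' \<and> cdim c' = i \<and> Wdim G n T s lab i c' = Some c
      then None else principal_red G T s lab c)"

definition Wfield :: "('v,'e) graph \<Rightarrow> nat \<Rightarrow> 'e set \<Rightarrow> 'v \<Rightarrow> ('v \<Rightarrow> 'e \<times> bool \<Rightarrow> nat) \<Rightarrow>
    ('v,'e) cell \<Rightarrow> ('v,'e) cell option" where
  "Wfield G n T s lab c = Wdim G n T s lab (cdim c) c"

definition has_nonstationary_closed_path ::
  "('v,'e) graph \<Rightarrow> nat \<Rightarrow> (('v,'e) cell \<Rightarrow> ('v,'e) cell option) \<Rightarrow> bool" where
  "has_nonstationary_closed_path G n W \<longleftrightarrow>
     (\<exists>(\<sigma> :: nat \<Rightarrow> ('v,'e) cell) r p. 0 < r \<and>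
        (\<forall>i\<le>r. is_cell G n (\<sigma> i) \<and> cdim (\<sigma> i) = p) \<and>
        \<sigma> r = \<sigma> 0 \<and> \<sigma> 1 \<noteq> \<sigma> 0 \<and>
        (\<forall>i<r. (W (\<sigma> i) = None \<longrightarrow> \<sigma> (Suc i) = \<sigma> i) \<and>
               (\<forall>\<tau>. W (\<sigma> i) = Some \<tau> \<longrightarrow> \<sigma> (Suc i) \<noteq> \<sigma> i \<and> face G (\<sigma> (Suc i)) \<tau>)))"

definition discrete_gradient_vector_field ::
  "('v,'e) graph \<Rightarrow> nat \<Rightarrow> (('v,'e) cell \<Rightarrow> ('v,'e) cell option) \<Rightarrow> bool" where
  "discrete_gradient_vector_field G n W \<longleftrightarrow>
     (\<forall>c \<tau>. is_cell G n c \<and> W c = Some \<tau> \<longrightarrow>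
         is_cell G n \<tau> \<and> cdim \<tau> = Suc (cdim c) \<and> regular_face G c \<tau>) \<and>
     (\<forall>c c' \<tau>. is_cell G n c \<and> is_cell G n c' \<and> W c = Some \<tau> \<and> W c' = Some \<tau> \<longrightarrow> c = c') \<and>
     (\<forall>c \<tau>. is_cell G n c \<and> W c = Some \<tau> \<longrightarrow> W \<tau> = None) \<and>
     \<not> has_nonstationary_closed_path G n W"

end

theory Submission
  imports Defs "HOL-Library.List_Lexorder" "HOL-Library.Sublist"
begin

fun pairs :: "'a list \<Rightarrow> ('a \<times> 'a) list" where
  "pairs (x # y # zs) = (x, y) # pairs (y # zs)"
| "pairs _ = []"

lemma pairs_append: "xs \<noteq> [] \<Longrightarrow> ys \<noteq> [] \<Longrightarrow> pairs (xs @ ys) = pairs xs @ (last xs, hd ys) # pairs ys"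
proof (induction xs rule: pairs.induct)
  case (1 x y zs) then show ?case by simp
next
  case ("2_1") then show ?case by simp
next
  case ("2_2" v) then show ?case by (cases ys) auto
qed

lemma length_pairs: "length (pairs xs) = length xs - 1"
  by (induction xs rule: pairs.induct) auto

lemma list_le_append: "(xs :: 'a :: linorder list) \<le> xs @ ys"
  by (induction xs) (auto simp: Nil_le_Cons)

lemma list_less_append: "ys \<noteq> [] \<Longrightarrow> (xs :: 'a :: linorder list) < xs @ ys"
  by (induction xs) (auto simp: neq_Nil_conv)

lemma list_le_diverge: "(x :: 'a :: linorder) \<noteq> y \<Longrightarrow> (C @ x # X \<le> C @ y # Y) \<longleftrightarrow> x < y"
  by (induction C) auto

lemma prefix_diverge: assumes "prefix p (r @ a1 # t1)" "prefix p (r @ a2 # t2)" "a1 \<noteq> a2"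
  shows "prefix p r"
proof (rule ccontr)
  assume np: "\<not> prefix p r"
  have "length r < length p"
  proof (rule ccontr)
    assume "\<not> length r < length p"
    then have "length p \<le> length r" by simp
    moreover have "prefix r (r @ a1 # t1)" by simp
    ultimately have "prefix p r" using assms(1) prefix_length_prefix by blast
    then show False using np by simp
  qed
  obtain zs where z1: "r @ a1 # t1 = p @ zs" using assms(1) by (auto simp: prefix_def)
  obtain zs' where z2: "r @ a2 # t2 = p @ zs'" using assms(2) by (auto simp: prefix_def)
  have "(r @ a1 # t1) ! length r = (p @ zs) ! length r" using z1 by simp
  then have pa1: "p ! length r = a1" using \<open>length r < length p\<close> by (simp add: nth_append)
  have "(r @ a2 # t2) ! length r = (p @ zs') ! length r" using z2 by simp
  then have "p ! length r = a2" using \<open>length r < length p\<close> by (simp add: nth_append)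
  then show False using pa1 assms(3) by simp
qed

locale tctx =
  fixes G :: "('v,'e) graph" and n :: nat and T :: "'e set" and s :: 'v
    and lab :: "'v \<Rightarrow> 'e \<times> bool \<Rightarrow> nat"
  assumes wf: "wf_graph G" and conn: "connected_graph G" and n1: "1 \<le> n"
    and st: "spanning_tree G T" and sV: "s \<in> verts G" and sdeg: "tdegree G T s = 1"
    and gl: "good_labelling G T s lab"
begin

abbreviation "V \<equiv> verts G"
abbreviation "A \<equiv> adj G T"

definition join :: "'e \<Rightarrow> 'v \<Rightarrow> 'v \<Rightarrow> bool" where
  "join e a b \<longleftrightarrow> (src G e = a \<and> tgt G e = b) \<or> (src G e = b \<and> tgt G e = a)"

lemma T_sub: "T \<subseteq> edges G" using st by (simp add: spanning_tree_def)
lemma acyc: "acyclic_edges G T" using st by (simp add: spanning_tree_def)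
lemma connT: "connected_by G T" using st by (simp add: spanning_tree_def)
lemma finV: "finite V" using wf by (simp add: wf_graph_def)
lemma edge_verts: "e \<in> edges G \<Longrightarrow> src G e \<in> V \<and> tgt G e \<in> V"
  using wf by (simp add: wf_graph_def)

lemma A_iff: "A u w \<longleftrightarrow> (\<exists>e\<in>T. join e u w)"
  by (simp add: adj_def join_def)

lemma A_sym: "A u w \<Longrightarrow> A w u" by (auto simp: adj_def)

lemma A_sym_eq: "A u w = A w u" using A_sym by blast

lemma A_verts: "A u w \<Longrightarrow> u \<in> V \<and> w \<in> V"
  using T_sub edge_verts by (auto simp: adj_def)

lemma no_loop: "e \<in> T \<Longrightarrow> src G e \<noteq> tgt G e"
proof
  assume e: "e \<in> T" and l: "src G e = tgt G e"
  have "epath G T [src G e, src G e] [e]" using e l by (simp add: epath_def)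
  then show False using acyc unfolding acyclic_edges_def by fastforce
qed

lemma A_neq: "A u w \<Longrightarrow> u \<noteq> w"
  unfolding adj_def by (metis no_loop)

lemma join_unique: "e1 \<in> T \<Longrightarrow> e2 \<in> T \<Longrightarrow> join e1 u w \<Longrightarrow> join e2 u w \<Longrightarrow> e1 = e2"
proof (rule ccontr)
  assume h: "e1 \<in> T" "e2 \<in> T" "join e1 u w" "join e2 u w" "e1 \<noteq> e2"
  have "epath G T [u, w, u] [e1, e2]"
    using h unfolding epath_def join_def by (auto simp: less_Suc_eq nth_Cons')
  then show False using acyc h(5) unfolding acyclic_edges_def by fastforce
qed


lemma cycle_False:
  assumes len: "3 \<le> length zs" and d: "distinct zs" and sc: "successively A zs"
    and cl: "A (last zs) (hd zs)"
  shows False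
proof -
  define L where "L = length zs"
  define vs where "vs = zs @ [hd zs]"
  have zne: "zs \<noteq> []" using len by auto
  have vsL: "vs ! L = hd zs" unfolding vs_def L_def by simp
  have vsi: "i < L \<Longrightarrow> vs ! i = zs ! i" for i unfolding vs_def L_def by (simp add: nth_append)
  have hd0: "hd zs = zs ! 0" using zne by (simp add: hd_conv_nth)
  have lastL: "last zs = zs ! (L - 1)" using zne by (simp add: L_def last_conv_nth)
  have adjs: "A (vs ! i) (vs ! Suc i)" if "i < L" for i
  proof (cases "Suc i < L")
    case True
    then show ?thesis using successively_nth[OF sc, of i] vsi L_def by simp
  next
    case False
    then have "i = L - 1" "Suc i = L" using that by auto
    then show ?thesis using cl vsL vsi that lastL by simp
  qed
  define es where "es = map (\<lambda>i. SOME e. e \<in> T \<and> join e (vs ! i) (vs ! Suc i)) [0..<L]"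
  have esi: "es ! i \<in> T \<and> join (es ! i) (vs ! i) (vs ! Suc i)" if "i < L" for i
  proof -
    have "\<exists>e. e \<in> T \<and> join e (vs ! i) (vs ! Suc i)" using adjs[OF that] A_iff by blast
    then have "(SOME e. e \<in> T \<and> join e (vs ! i) (vs ! Suc i)) \<in> T \<and>
       join (SOME e. e \<in> T \<and> join e (vs ! i) (vs ! Suc i)) (vs ! i) (vs ! Suc i)" by (rule someI_ex)
    then show ?thesis unfolding es_def using that by simp
  qed
  have les: "length es = L" by (simp add: es_def)
  have ep: "epath G T vs es"
    unfolding epath_def using les esi by (auto simp: vs_def L_def join_def)
  have dz: "zs ! i = zs ! j \<Longrightarrow> i < L \<Longrightarrow> j < L \<Longrightarrow> i = j" for i j
    using d by (simp add: L_def nth_eq_iff_index_eq)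
  have des: "distinct es"
  proof (subst distinct_conv_nth, intro allI impI)
    fix i j assume ij: "i < length es" "j < length es" "i \<noteq> j"
    show "es ! i \<noteq> es ! j"
    proof
      assume eq: "es ! i = es ! j"
      have ji1: "join (es ! i) (vs ! i) (vs ! Suc i)" using esi[of i] ij les by auto
      have ji2: "join (es ! i) (vs ! j) (vs ! Suc j)" using esi[of j] ij les eq by simp
      note ji = ji1 ji2
      { fix i j assume ij: "i < L" "j < L" "i < j"
        and ji: "join (es ! i) (vs ! i) (vs ! Suc i)" "join (es ! i) (vs ! j) (vs ! Suc j)"
        then have c: "(vs ! i = vs ! j \<and> vs ! Suc i = vs ! Suc j) \<or> (vs ! i = vs ! Suc j \<and> vs ! Suc i = vs ! j)"
          unfolding join_def by auto
        have "i < L" using ij by auto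
        then have "vs ! i \<noteq> vs ! j" using vsi[of i] vsi[of j] ij dz[of i j] by auto
        then have c2: "vs ! i = vs ! Suc j" "vs ! Suc i = vs ! j" using c by auto
        have "Suc j = L"
        proof (rule ccontr)
          assume "Suc j \<noteq> L" then have "Suc j < L" using ij by auto
          then have "i = Suc j" using c2 vsi ij dz by auto
          then show False using ij by auto
        qed
        then have "vs ! Suc j = zs ! 0" using vsL hd0 by simp
        then have "i = 0" using c2 vsi[of i] \<open>i < L\<close> dz[of i 0] len L_def zne by auto
        then have "vs ! Suc 0 = vs ! j" using c2 by simp
        moreover have "Suc 0 < L" using len L_def by simp
        ultimately have "Suc 0 = j" using vsi[of "Suc 0"] vsi[of j] ij dz[of "Suc 0" j] by auto
        then have False using \<open>Suc j = L\<close> len L_def by auto }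
      note * = this
      show False
      proof (cases "i < j")
        case True then show ?thesis using *[of i j] ji ij les by auto
      next
        case False then have "j < i" using ij by auto
        then show ?thesis using *[of j i] ji ij les eq by auto
      qed
    qed
  qed
  have "es \<noteq> []" using les len L_def by auto
  moreover have "hd vs = last vs" unfolding vs_def using zne by simp
  ultimately show False using acyc ep des unfolding acyclic_edges_def by blast
qed


lemma A_flip: "(\<lambda>x y. A y x) = A" by (intro ext) (auto simp: adj_def)

lemma succ_rev_A: "successively A (rev xs) \<longleftrightarrow> successively A xs"
  by (simp add: A_sym_eq)

lemma path_unique:
  "successively A xs \<Longrightarrow> successively A ys \<Longrightarrow> distinct xs \<Longrightarrow> distinct ys \<Longrightarrow>
   xs \<noteq> [] \<Longrightarrow> ys \<noteq> [] \<Longrightarrow> hd xs = hd ys \<Longrightarrow> last xs = last ys \<Longrightarrow> xs = ys"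
proof (induction xs arbitrary: ys)
  case Nil then show ?case by simp
next
  case (Cons a xs')
  obtain ys' where ys: "ys = a # ys'" using Cons.prems by (cases ys) auto
  show ?case
  proof (cases "xs' = []")
    case True
    then have "last ys = a" using Cons.prems by simp
    then have "ys' = []" using Cons.prems(4) ys by (metis distinct.simps(2) last.simps last_in_set)
    then show ?thesis using True ys by simp
  next
    case xne: False
    show ?thesis
    proof (cases "ys' = []")
      case True
      then have "last (a # xs') = a" using Cons.prems ys by simp
      then have False using Cons.prems(3) xne by (metis distinct.simps(2) last.simps last_in_set)
      then show ?thesis ..
    next
      case yne: False
      have sx: "successively A xs'" and sy: "successively A ys'"
        using Cons.prems(1,2) ys by (auto simp: successively_Cons)
      have ax: "A a (hd xs')" using Cons.prems(1) xne by (auto simp: successively_Cons)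
      have ay: "A a (hd ys')" using Cons.prems(2) ys yne by (auto simp: successively_Cons)
      have dx: "distinct xs'" "a \<notin> set xs'" using Cons.prems(3) by auto
      have dy: "distinct ys'" "a \<notin> set ys'" using Cons.prems(4) ys by auto
      have ll: "last xs' = last ys'" using Cons.prems(8) ys xne yne by simp
      show ?thesis
      proof (cases "hd xs' = hd ys'")
        case True
        then have "xs' = ys'" using Cons.IH[OF sx sy dx(1) dy(1) xne yne True ll] by simp
        then show ?thesis using ys by simp
      next
        case hne: False
        have "\<exists>x\<in>set xs'. x \<in> set ys'" using ll xne yne by (metis last_in_set)
        then obtain p c q where xs': "xs' = p @ c # q" and cy: "c \<in> set ys'"
          and pn: "\<forall>y\<in>set p. y \<notin> set ys'"
          using split_list_first_prop[of xs' "\<lambda>x. x \<in> set ys'"] by blast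
        obtain r t where ys': "ys' = r @ c # t" using cy split_list by metis
        define zs where "zs = a # p @ c # rev r"
        have "p \<noteq> [] \<or> r \<noteq> []"
        proof (rule ccontr)
          assume "\<not> (p \<noteq> [] \<or> r \<noteq> [])"
          then have "hd xs' = c" "hd ys' = c" using xs' ys' by auto
          then show False using hne by simp
        qed
        then have "0 < length p + length r" by (metis add_gr_0 length_greater_0_conv)
        moreover have "length zs = length p + length r + 2" unfolding zs_def by simp
        ultimately have len: "3 \<le> length zs" by linarith
        have dz: "distinct zs"
          unfolding zs_def using dx dy xs' ys' pn by auto
        have s1: "successively A (a # p @ [c])"
        proof -
          have "successively A (a # xs')" using Cons.prems(1) .
          then have "successively A ((a # p @ [c]) @ q)" using xs' by simp
          then show ?thesis by (simp only: successively_append_iff)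
        qed
        have s2: "successively A (r @ [c])"
        proof -
          have "successively A ((r @ [c]) @ t)" using sy ys' by simp
          then show ?thesis by (simp only: successively_append_iff)
        qed
        then have s3: "successively A (c # rev r)"
          using succ_rev_A[of "r @ [c]"] by simp
        have sz: "successively A zs"
        proof -
          have z: "zs = (a # p) @ (c # rev r)" unfolding zs_def by simp
          have h1: "successively A (a # p)" using s1
            by (metis append_Cons successively_append_iff)
          have h2: "A (last (a # p)) c" using s1
            by (metis append_Cons append_is_Nil_conv last_snoc list.discI list.sel(1)
                successively_append_iff)
          have "successively A ((a # p) @ (c # rev r))"
            unfolding successively_append_iff using h1 h2 s3 by auto
          then show ?thesis using z by simp
        qed
        have cl: "A (last zs) (hd zs)"
        proof (cases "r = []")
          case True
          then have "hd ys' = c" using ys' by simp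
          then show ?thesis using ay True unfolding zs_def by (simp add: A_sym_eq)
        next
          case False
          then have "last zs = hd r" unfolding zs_def by (simp add: last_rev)
          moreover have "hd ys' = hd r" using ys' False by simp
          ultimately show ?thesis using ay unfolding zs_def by (simp add: A_sym_eq)
        qed
        show ?thesis using cycle_False[OF len dz sz cl] ..
      qed
    qed
  qed
qed

lemma walk_to_path:
  "successively A xs \<Longrightarrow> xs \<noteq> [] \<Longrightarrow>
   \<exists>ys. successively A ys \<and> distinct ys \<and> ys \<noteq> [] \<and> hd ys = hd xs \<and> last ys = last xs"
proof (induction "length xs" arbitrary: xs rule: less_induct)
  case less
  show ?case
  proof (cases "distinct xs")
    case True then show ?thesis using less.prems by blast
  next
    case False
    then obtain as y bs cs where xs: "xs = as @ [y] @ bs @ [y] @ cs"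
      using not_distinct_decomp by blast
    define xs2 where "xs2 = as @ [y] @ cs"
    have "length xs2 < length xs" unfolding xs2_def xs by simp
    moreover have "successively A xs2"
    proof -
      have s0: "successively A ((as @ [y] @ bs) @ (y # cs))" using less.prems(1) xs by simp
      then have a1: "successively A (y # cs)" by (simp only: successively_append_iff)
      have "successively A ((as @ [y]) @ bs)" using s0 by (metis append_assoc successively_append_iff)
      then have "successively A (as @ [y])" by (simp only: successively_append_iff)
      then have "successively A as" "as = [] \<or> A (last as) y" by (auto simp: successively_append_iff)
      then show ?thesis unfolding xs2_def using a1 by (auto simp: successively_append_iff)
    qed
    moreover have "xs2 \<noteq> []" unfolding xs2_def by simp
    ultimately obtain ys where "successively A ys \<and> distinct ys \<and> ys \<noteq> [] \<and> hd ys = hd xs2 \<and> last ys = last xs2"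
      using less.hyps by blast
    moreover have "hd xs2 = hd xs" "last xs2 = last xs" unfolding xs2_def xs
      by (cases as; simp) (cases cs; simp)
    ultimately show ?thesis by auto
  qed
qed

lemma walk_verts: "successively A xs \<Longrightarrow> hd xs \<in> V \<Longrightarrow> set xs \<subseteq> V"
proof (induction xs)
  case Nil then show ?case by simp
next
  case (Cons a xs)
  show ?case
  proof (cases "xs = []")
    case True then show ?thesis using Cons by simp
  next
    case False
    then have "A a (hd xs)" "successively A xs" using Cons.prems by (auto simp: successively_Cons)
    then show ?thesis using Cons A_verts by auto
  qed
qed

definition isp :: "'v \<Rightarrow> 'v \<Rightarrow> 'v list \<Rightarrow> bool" where
  "isp a b xs \<longleftrightarrow> vwalk G T xs \<and> distinct xs \<and> hd xs = a \<and> last xs = b"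

lemma isp_iff: "isp a b xs \<longleftrightarrow> successively A xs \<and> xs \<noteq> [] \<and> distinct xs \<and> hd xs = a \<and> last xs = b"
  by (auto simp: isp_def vwalk_def)

lemma geo_eq: "isp a b xs \<Longrightarrow> tgeo G T a b = xs"
  unfolding tgeo_def isp_def[symmetric]
proof (rule the_equality)
  fix ys assume "isp a b xs" "isp a b ys" then show "ys = xs"
    using path_unique unfolding isp_iff by metis
qed

lemma geo_ex: "a \<in> V \<Longrightarrow> b \<in> V \<Longrightarrow> \<exists>xs. isp a b xs"
proof -
  assume "a \<in> V" "b \<in> V"
  then obtain xs where "vwalk G T xs" "hd xs = a" "last xs = b"
    using connT unfolding connected_by_def by blast
  then show ?thesis using walk_to_path[of xs] unfolding isp_iff vwalk_def by metis
qed

lemma geo: "a \<in> V \<Longrightarrow> b \<in> V \<Longrightarrow> isp a b (tgeo G T a b)"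
  using geo_ex geo_eq by metis

lemma isp_verts: "isp a b xs \<Longrightarrow> a \<in> V \<Longrightarrow> set xs \<subseteq> V"
  using walk_verts unfolding isp_iff by metis

lemma isp_single: "isp a a xs \<longleftrightarrow> xs = [a]"
proof
  assume "isp a a xs"
  then have "xs \<noteq> []" "distinct xs" "hd xs = a" "last xs = a" by (auto simp: isp_iff)
  then show "xs = [a]"
    by (metis distinct.simps(2) hd_Cons_tl last.simps last_in_set)
qed (simp add: isp_iff)

lemma isp_rev: "isp a b xs \<Longrightarrow> isp b a (rev xs)"
  unfolding isp_iff using succ_rev_A by (auto simp del: successively_rev simp add: hd_rev last_rev)


definition ps :: "'v \<Rightarrow> 'v list" where "ps v = tgeo G T s v"
definition par :: "'v \<Rightarrow> 'v" where "par v = tgeo G T v s ! 1"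
definition dep :: "'v \<Rightarrow> nat" where "dep v = length (ps v) - 1"
abbreviation ed :: "'v \<Rightarrow> 'e" where "ed v \<equiv> edown G T s v"

lemma ps_isp: "v \<in> V \<Longrightarrow> isp s v (ps v)"
  unfolding ps_def using geo sV by blast

lemma ps_props: "v \<in> V \<Longrightarrow> successively A (ps v) \<and> ps v \<noteq> [] \<and> distinct (ps v) \<and> hd (ps v) = s \<and> last (ps v) = v"
  using ps_isp isp_iff by blast

lemma ps_V: "v \<in> V \<Longrightarrow> set (ps v) \<subseteq> V"
  using ps_isp isp_verts sV by blast

lemma ps_s: "ps s = [s]"
  unfolding ps_def by (rule geo_eq) (simp add: isp_single)

lemma tgeo_to_s: "v \<in> V \<Longrightarrow> tgeo G T v s = rev (ps v)"
  by (rule geo_eq) (use isp_rev ps_isp in blast)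

lemma ps_par: assumes v: "v \<in> V" "v \<noteq> s"
  shows "ps v = ps (par v) @ [v] \<and> par v \<in> V \<and> A (par v) v \<and> par v \<noteq> v"
proof -
  have P: "successively A (ps v)" "ps v \<noteq> []" "distinct (ps v)" "hd (ps v) = s" "last (ps v) = v"
    using ps_props[OF v(1)] by auto
  define q where "q = butlast (ps v)"
  have xs: "ps v = q @ [v]" unfolding q_def using P by (metis append_butlast_last_id)
  have qne: "q \<noteq> []"
  proof
    assume "q = []" then have "ps v = [v]" using xs by simp
    then show False using P v by simp
  qed
  have "par v = rev (ps v) ! 1" unfolding par_def using tgeo_to_s[OF v(1)] by simp
  also have "\<dots> = last q" using xs qne by (simp add: nth_append last_conv_nth rev_nth)
  finally have pv: "par v = last q" .
  have sq: "successively A q" "A (last q) v" using P(1) xs qne by (auto simp: successively_append_iff)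
  have "isp s (last q) q" unfolding isp_iff using sq P xs qne by (auto simp: hd_append)
  then have "ps (last q) = q" unfolding ps_def by (rule geo_eq)
  then have 1: "ps v = ps (par v) @ [v]" using xs pv by simp
  have "par v \<in> set (ps v)" using pv xs qne by simp
  then have 2: "par v \<in> V" using ps_V v by blast
  have 3: "par v \<noteq> v" using P(3) xs pv qne by auto
  show ?thesis using 1 2 3 sq pv by simp
qed

lemma dep_par: "v \<in> V \<Longrightarrow> v \<noteq> s \<Longrightarrow> dep v = Suc (dep (par v))"
  using ps_par[of v] ps_props[of "par v"] unfolding dep_def by (cases "ps (par v)") auto

lemma dep_lt: "v \<in> V \<Longrightarrow> dep v < card V"
proof -
  assume v: "v \<in> V"
  have "length (ps v) = card (set (ps v))" using ps_props[OF v] by (simp add: distinct_card)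
  also have "\<dots> \<le> card V" using ps_V[OF v] finV by (simp add: card_mono)
  finally show ?thesis unfolding dep_def using ps_props[OF v] by (cases "ps v") auto
qed

lemma tedge_def2: "tedge G T u w = (THE e. e \<in> T \<and> join e u w)"
  by (simp add: tedge_def join_def)

lemma tedge_props: "A u w \<Longrightarrow> tedge G T u w \<in> T \<and> join (tedge G T u w) u w"
proof -
  assume "A u w"
  then obtain f where f: "f \<in> T" "join f u w" using A_iff by blast
  have "\<exists>!e. e \<in> T \<and> join e u w" using f join_unique by blast
  then show ?thesis unfolding tedge_def2 by (rule theI')
qed

lemma tedge_eq: "f \<in> T \<Longrightarrow> join f u w \<Longrightarrow> tedge G T u w = f"
  unfolding tedge_def2 using join_unique by blast

lemma ed_props: assumes v: "v \<in> V" "v \<noteq> s"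
  shows "ed v = tedge G T v (par v) \<and> ed v \<in> T \<and> ed v \<in> edges G \<and> join (ed v) v (par v) \<and>
    cl G (Inr (ed v)) = {v, par v}"
proof -
  have e1: "ed v = tedge G T v (par v)" unfolding edown_def par_def by simp
  have "A v (par v)" using ps_par[OF v] A_sym by blast
  then have "tedge G T v (par v) \<in> T \<and> join (tedge G T v (par v)) v (par v)" by (rule tedge_props)
  then show ?thesis using e1 T_sub by (auto simp: cl_def join_def)
qed

lemma ed_inj: "v \<in> V \<Longrightarrow> v \<noteq> s \<Longrightarrow> w \<in> V \<Longrightarrow> w \<noteq> s \<Longrightarrow> ed v = ed w \<Longrightarrow> v = w"
proof (rule ccontr)
  assume h: "v \<in> V" "v \<noteq> s" "w \<in> V" "w \<noteq> s" "ed v = ed w" "v \<noteq> w"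
  have "{v, par v} = {w, par w}" using ed_props[OF h(1,2)] ed_props[OF h(3,4)] h(5) by metis
  then have "v = par w" "w = par v" using h(6) by (auto simp: doubleton_eq_iff)
  then show False using dep_par[of v] dep_par[of w] h by simp
qed

lemma ps_prefix: assumes v: "v \<in> V" and u: "u \<in> set (ps v)" shows "\<exists>t. ps v = ps u @ t"
proof -
  obtain r t where rt: "ps v = r @ u # t" using u split_list by metis
  have P: "successively A (ps v)" "ps v \<noteq> []" "distinct (ps v)" "hd (ps v) = s" "last (ps v) = v"
    using ps_props[OF v] by auto
  have "successively A ((r @ [u]) @ t)" using P(1) rt by simp
  then have "successively A (r @ [u])" by (simp only: successively_append_iff)
  moreover have "hd (r @ [u]) = s" using P(4) rt by (cases r) auto
  moreover have "distinct (r @ [u])" using P(3) rt by simp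
  ultimately have "isp s u (r @ [u])" unfolding isp_iff by simp
  then have "ps u = r @ [u]" unfolding ps_def by (rule geo_eq)
  then show ?thesis using rt by simp
qed

lemma ed_surj: assumes f: "f \<in> T" shows "\<exists>x. x \<in> V \<and> x \<noteq> s \<and> ed x = f"
proof -
  define a b where "a = src G f" "b = tgt G f"
  have ab: "A a b" "join f a b" using f unfolding a_b_def A_iff join_def by auto
  have abV: "a \<in> V" "b \<in> V" using A_verts ab by auto
  have anb: "a \<noteq> b" using A_neq ab by blast
  have "(b \<noteq> s \<and> par b = a) \<or> (a \<noteq> s \<and> par a = b)"
  proof (cases "b \<in> set (ps a)")
    case False
    have P: "successively A (ps a)" "ps a \<noteq> []" "distinct (ps a)" "hd (ps a) = s" "last (ps a) = a"
      using ps_props[OF abV(1)] by auto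
    have "isp s b (ps a @ [b])" unfolding isp_iff using P False ab
      by (auto simp: successively_append_iff)
    then have pb: "ps b = ps a @ [b]" unfolding ps_def by (rule geo_eq)
    have bs: "b \<noteq> s" using P False by (metis hd_in_set)
    then have "ps b = ps (par b) @ [b]" using ps_par abV by blast
    then have "ps (par b) = ps a" using pb by simp
    then have "par b = a" using ps_props[OF abV(1)] ps_props[of "par b"] ps_par[OF abV(2) bs] by metis
    then show ?thesis using bs by simp
  next
    case True
    obtain r t where rt: "ps a = r @ b # t" using True split_list by metis
    have P: "successively A (ps a)" "ps a \<noteq> []" "distinct (ps a)" "hd (ps a) = s" "last (ps a) = a"
      using ps_props[OF abV(1)] by auto
    have tne: "t \<noteq> []"
    proof
      assume "t = []" then have "last (ps a) = b" using rt by simp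
      then show False using P(5) anb by simp
    qed
    have "last (ps a) = last t" using rt tne by simp
    then have ant: "a \<in> set t" using P(5) tne last_in_set by metis
    have "isp s a (r @ [b, a])" unfolding isp_iff
    proof (intro conjI)
      have "successively A ((r @ [b]) @ t)" using P(1) rt by simp
      then have "successively A (r @ [b])" by (simp only: successively_append_iff)
      then show "successively A (r @ [b, a])" using ab A_sym
        by (auto simp: successively_append_iff)
      show "distinct (r @ [b, a])" using P(3) rt ant anb by auto
      show "hd (r @ [b, a]) = s" using P(4) rt by (cases r) auto
    qed auto
    then have pa: "ps a = (r @ [b]) @ [a]" unfolding ps_def by (simp add: geo_eq)
    have as: "a \<noteq> s" using pa ps_s by (cases r) auto
    then have "ps a = ps (par a) @ [a]" using ps_par abV by blast
    then have "ps (par a) = r @ [b]" using pa by simp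
    then have "par a = b" using ps_props[of "par a"] ps_par[OF abV(1) as] by (metis last_snoc)
    then show ?thesis using as by simp
  qed
  then show ?thesis
  proof
    assume h: "b \<noteq> s \<and> par b = a"
    have "ed b = f" using ed_props[of b] h abV tedge_eq[OF f, of b "par b"] ab(2)
      by (auto simp: join_def)
    then show ?thesis using h abV by blast
  next
    assume h: "a \<noteq> s \<and> par a = b"
    have "ed a = f" using ed_props[of a] h abV tedge_eq[OF f, of a "par a"] ab(2)
      by (auto simp: join_def)
    then show ?thesis using h abV by blast
  qed
qed


definition lk :: "'v \<Rightarrow> 'v \<Rightarrow> nat" where "lk u w = lab u (hdir G (tedge G T u w) u)"
definition key :: "'v \<Rightarrow> nat list" where "key v = map (\<lambda>(u,w). lk u w) (pairs (ps v))"

lemma lk_inj: assumes "u \<in> V" "A u a1" "A u a2" "a1 \<noteq> a2" shows "lk u a1 \<noteq> lk u a2"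
proof -
  have inj: "inj_on (lab u) (dirs G u)" using gl assms(1) unfolding good_labelling_def bij_betw_def by blast
  have t1: "tedge G T u a1 \<in> T \<and> join (tedge G T u a1) u a1" using tedge_props assms(2) by blast
  have t2: "tedge G T u a2 \<in> T \<and> join (tedge G T u a2) u a2" using tedge_props assms(3) by blast
  have ne: "tedge G T u a1 \<noteq> tedge G T u a2"
  proof
    assume "tedge G T u a1 = tedge G T u a2"
    then show False using t1 t2 assms(4) by (auto simp: join_def)
  qed
  have d1: "hdir G (tedge G T u a1) u \<in> dirs G u" using t1 T_sub by (auto simp: hdir_def dirs_def join_def)
  have d2: "hdir G (tedge G T u a2) u \<in> dirs G u" using t2 T_sub by (auto simp: hdir_def dirs_def join_def)
  have "hdir G (tedge G T u a1) u \<noteq> hdir G (tedge G T u a2) u" using ne by (simp add: hdir_def)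
  then show ?thesis unfolding lk_def using inj d1 d2 by (meson inj_on_eq_iff)
qed

lemma key_append: "xs \<noteq> [] \<Longrightarrow> ys \<noteq> [] \<Longrightarrow>
  map (\<lambda>(u,w). lk u w) (pairs (xs @ ys)) = map (\<lambda>(u,w). lk u w) (pairs xs) @ lk (last xs) (hd ys) # map (\<lambda>(u,w). lk u w) (pairs ys)"
  by (simp add: pairs_append)

lemma meet_eq: "meet G T s v1 v2 = last (filter (\<lambda>x. x \<in> set (ps v2)) (ps v1))"
  by (simp add: meet_def ps_def)

lemma vle_key: assumes v1: "v1 \<in> V" and v2: "v2 \<in> V"
  shows "(vle G T s lab v1 v2 \<longleftrightarrow> key v1 \<le> key v2) \<and> (key v1 = key v2 \<longrightarrow> v1 = v2)"
proof -
  have P1: "successively A (ps v1)" "ps v1 \<noteq> []" "distinct (ps v1)" "hd (ps v1) = s" "last (ps v1) = v1"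
    using ps_props[OF v1] by auto
  have P2: "successively A (ps v2)" "ps v2 \<noteq> []" "distinct (ps v2)" "hd (ps v2) = s" "last (ps v2) = v2"
    using ps_props[OF v2] by auto
  show ?thesis
  proof (cases rule: prefix_cases[of "ps v1" "ps v2"])
    case 1
    then obtain t where t: "ps v2 = ps v1 @ t" by (auto simp: prefix_def)
    have "filter (\<lambda>x. x \<in> set (ps v2)) (ps v1) = ps v1" using t by simp
    then have "meet G T s v1 v2 = v1" using P1 meet_eq by simp
    then have vl: "vle G T s lab v1 v2" by (simp add: vle_def Let_def)
    have kl: "key v1 \<le> key v2"
    proof (cases "t = []")
      case True then show ?thesis using t by (simp add: key_def)
    next
      case False
      then have "key v2 = key v1 @ (lk (last (ps v1)) (hd t) # map (\<lambda>(u,w). lk u w) (pairs t))"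
        unfolding key_def using t key_append P1 by simp
      then show ?thesis by (simp add: list_le_append)
    qed
    have "key v1 = key v2 \<longrightarrow> v1 = v2"
    proof
      assume k: "key v1 = key v2"
      have "length (key v1) = length (ps v1) - 1" "length (key v2) = length (ps v2) - 1"
        by (simp_all add: key_def length_pairs)
      then have "t = []" using k t P1 by (cases "ps v1") auto
      then show "v1 = v2" using t P1 P2 by simp
    qed
    then show ?thesis using vl kl by simp
  next
    case 2
    then obtain t where t: "ps v1 = ps v2 @ t" "t \<noteq> []" by (auto simp: strict_prefix_def prefix_def)
    have dt: "\<forall>x\<in>set t. x \<notin> set (ps v2)" using P1(3) t by auto
    have "filter (\<lambda>x. x \<in> set (ps v2)) (ps v1) = ps v2" using t dt by (simp add: filter_empty_conv)
    then have m: "meet G T s v1 v2 = v2" using P2 meet_eq by simp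
    have "v1 \<in> set t" using P1(5) t by (metis last_appendR last_in_set)
    then have ne: "v1 \<noteq> v2" using dt P2 by (metis last_in_set)
    have vl: "\<not> vle G T s lab v1 v2" using m ne by (simp add: vle_def Let_def gdir_def)
    have "key v1 = key v2 @ (lk (last (ps v2)) (hd t) # map (\<lambda>(u,w). lk u w) (pairs t))"
      unfolding key_def using t key_append P2 by simp
    then have "key v2 < key v1" by (simp add: list_less_append)
    then show ?thesis using vl by auto
  next
    case 3
    then obtain r a1 t1 a2 t2 where d: "a1 \<noteq> a2" "ps v1 = r @ a1 # t1" "ps v2 = r @ a2 # t2"
      using parallel_decomp by blast
    have rne: "r \<noteq> []"
    proof
      assume "r = []" then show False using d P1(4) P2(4) by simp
    qed
    have notin: "z \<notin> set (ps v2)" if z: "z \<in> set (a1 # t1)" for z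
    proof
      assume z2: "z \<in> set (ps v2)"
      have z1: "z \<in> set (ps v1)" using z d by auto
      have zV: "z \<in> V" using z1 ps_V v1 by blast
      obtain t' where "ps v1 = ps z @ t'" using ps_prefix[OF v1 z1] by blast
      then have p1: "prefix (ps z) (r @ a1 # t1)" using d by (simp add: prefix_def)
      obtain t'' where "ps v2 = ps z @ t''" using ps_prefix[OF v2 z2] by blast
      then have p2: "prefix (ps z) (r @ a2 # t2)" using d by (simp add: prefix_def)
      have "prefix (ps z) r" using prefix_diverge[OF p1 p2 d(1)] .
      then have "set (ps z) \<subseteq> set r" by (simp add: set_mono_prefix)
      then have "z \<in> set r" using ps_props[OF zV] by (metis last_in_set subsetD)
      then show False using P1(3) d z by auto
    qed
    have "filter (\<lambda>x. x \<in> set (ps v2)) (ps v1) = r"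
      using d notin by (auto simp: filter_empty_conv)
    then have m: "meet G T s v1 v2 = last r" using meet_eq by simp
    define v3 where "v3 = last r"
    obtain r' where r': "r = r' @ [v3]" using rne unfolding v3_def by (metis append_butlast_last_id)
    have v1in: "v1 \<in> set (a1 # t1)" using P1(5) d by (metis last_appendR last_in_set list.distinct(1))
    have v2in: "v2 \<in> set (a2 # t2)" using P2(5) d by (metis last_appendR last_in_set list.distinct(1))
    have n31: "v3 \<noteq> v1" using P1(3) d r' v1in by auto
    have n32: "v3 \<noteq> v2" using P2(3) d r' v2in by auto
    have suf1: "successively A (v3 # a1 # t1)"
    proof -
      have "successively A (r' @ (v3 # a1 # t1))" using P1(1) d r' by simp
      then show ?thesis by (simp only: successively_append_iff)
    qed
    have suf2: "successively A (v3 # a2 # t2)"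
    proof -
      have "successively A (r' @ (v3 # a2 # t2))" using P2(1) d r' by simp
      then show ?thesis by (simp only: successively_append_iff)
    qed
    have "isp v3 v1 (v3 # a1 # t1)" unfolding isp_iff using suf1 P1 d r' by auto
    then have g1: "tgeo G T v3 v1 = v3 # a1 # t1" by (rule geo_eq)
    have "isp v3 v2 (v3 # a2 # t2)" unfolding isp_iff using suf2 P2 d r' by auto
    then have g2: "tgeo G T v3 v2 = v3 # a2 # t2" by (rule geo_eq)
    have gd1: "gdir G T lab v3 v1 = lk v3 a1" using g1 n31 by (simp add: gdir_def lk_def)
    have gd2: "gdir G T lab v3 v2 = lk v3 a2" using g2 n32 by (simp add: gdir_def lk_def)
    have vl: "vle G T s lab v1 v2 \<longleftrightarrow> lk v3 a1 < lk v3 a2"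
      using m n31 gd1 gd2 unfolding vle_def Let_def v3_def by auto
    have A1: "A v3 a1" using suf1 by simp
    have A2: "A v3 a2" using suf2 by simp
    have v3V: "v3 \<in> V" using A1 A_verts by blast
    have lne: "lk v3 a1 \<noteq> lk v3 a2" using lk_inj[OF v3V A1 A2 d(1)] .
    have k1: "key v1 = map (\<lambda>(u,w). lk u w) (pairs r) @ lk v3 a1 # map (\<lambda>(u,w). lk u w) (pairs (a1 # t1))"
      unfolding key_def using d rne key_append[of r "a1 # t1"] v3_def by simp
    have k2: "key v2 = map (\<lambda>(u,w). lk u w) (pairs r) @ lk v3 a2 # map (\<lambda>(u,w). lk u w) (pairs (a2 # t2))"
      unfolding key_def using d rne key_append[of r "a2 # t2"] v3_def by simp
    have "key v1 \<le> key v2 \<longleftrightarrow> lk v3 a1 < lk v3 a2" unfolding k1 k2 using list_le_diverge[OF lne] .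
    moreover have "key v1 \<noteq> key v2" unfolding k1 k2 using lne by simp
    ultimately show ?thesis using vl by simp
  qed
qed

definition vlt where "vlt v w \<longleftrightarrow> vle G T s lab v w \<and> v \<noteq> w"

lemma vle_refl: "v \<in> V \<Longrightarrow> vle G T s lab v v"
  using vle_key by blast
lemma vle_antisym: "v \<in> V \<Longrightarrow> w \<in> V \<Longrightarrow> vle G T s lab v w \<Longrightarrow> vle G T s lab w v \<Longrightarrow> v = w"
  using vle_key by (meson order_antisym)
lemma vle_trans: "u \<in> V \<Longrightarrow> v \<in> V \<Longrightarrow> w \<in> V \<Longrightarrow> vle G T s lab u v \<Longrightarrow> vle G T s lab v w \<Longrightarrow> vle G T s lab u w"
  using vle_key by (meson order_trans)
lemma vle_total: "v \<in> V \<Longrightarrow> w \<in> V \<Longrightarrow> vle G T s lab v w \<or> vle G T s lab w v"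
  using vle_key by (meson le_cases)

lemma ex_min: assumes "finite S" "S \<noteq> {}" "S \<subseteq> V" shows "\<exists>m\<in>S. \<forall>w\<in>S. vle G T s lab m w"
proof -
  have "Min (key ` S) \<in> key ` S" using assms by simp
  then obtain m where m: "m \<in> S" "key m = Min (key ` S)" by auto
  have "\<forall>w\<in>S. key m \<le> key w" using m assms by simp
  then show ?thesis using m assms vle_key by blast
qed

end


context tctx
begin

abbreviation cell :: "('v,'e) cell \<Rightarrow> bool" where "cell c \<equiv> is_cell G n c"
abbreviation W :: "('v,'e) cell \<Rightarrow> ('v,'e) cell option" where "W \<equiv> Wfield G n T s lab"
abbreviation vl :: "'v \<Rightarrow> 'v \<Rightarrow> bool" where "vl \<equiv> vle G T s lab"

definition U :: "('v,'e) cell \<Rightarrow> 'v set" where "U c = {v. unblocked G T s c v}"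
definition unred :: "('v,'e) cell \<Rightarrow> 'v \<Rightarrow> ('v,'e) cell" where
  "unred c a = insert (Inl a) (c - {Inr (ed a)})"
abbreviation red :: "('v,'e) cell \<Rightarrow> 'v \<Rightarrow> ('v,'e) cell" where
  "red c v \<equiv> elem_red G T s c v"

lemma red_def2: "red c v = insert (Inr (ed v)) (c - {Inl v})" by (simp add: elem_red_def)

lemma cl_Inl[simp]: "cl G (Inl v) = {v}" by (simp add: cl_def)
lemma cl_Inr: "cl G (Inr e) = {src G e, tgt G e}" by (simp add: cl_def)
lemma cl_ne: "cl G x \<noteq> {}" by (cases x) (auto simp: cl_def)

lemma cl_ed: "v \<in> V \<Longrightarrow> v \<noteq> s \<Longrightarrow> cl G (Inr (ed v)) = {v, par v}"
  using ed_props by blast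

lemma U_iff: "v \<in> U c \<longleftrightarrow> Inl v \<in> c \<and> v \<noteq> s \<and> (\<forall>x\<in>c. x \<noteq> Inl v \<longrightarrow> cl G (Inr (ed v)) \<inter> cl G x = {})"
  by (simp add: U_def unblocked_def)

lemma cell_Inl: "cell c \<Longrightarrow> Inl v \<in> c \<Longrightarrow> v \<in> V"
  unfolding is_cell_def by force
lemma cell_Inr: "cell c \<Longrightarrow> Inr e \<in> c \<Longrightarrow> e \<in> edges G"
  unfolding is_cell_def by force
lemma cell_disj: "cell c \<Longrightarrow> x \<in> c \<Longrightarrow> y \<in> c \<Longrightarrow> x \<noteq> y \<Longrightarrow> cl G x \<inter> cl G y = {}"
  unfolding is_cell_def pairwise_def by blast
lemma cell_fin: "cell c \<Longrightarrow> finite c" unfolding is_cell_def by blast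

lemma U_V: "cell c \<Longrightarrow> U c \<subseteq> V" using cell_Inl U_iff by blast
lemma U_fin: "cell c \<Longrightarrow> finite (U c)" using U_V finV finite_subset by blast
lemma U_ns: "v \<in> U c \<Longrightarrow> v \<noteq> s" using U_iff by blast

lemma fin_edges: "finite c \<Longrightarrow> finite {e. Inr e \<in> c}"
  using finite_vimageI[of c Inr] by (simp add: vimage_def)

lemma Inr_ed_notin: "cell c \<Longrightarrow> v \<in> U c \<Longrightarrow> Inr (ed v) \<notin> c"
proof
  assume c: "cell c" and v: "v \<in> U c" and e: "Inr (ed v) \<in> c"
  then have "cl G (Inr (ed v)) \<inter> cl G (Inr (ed v)) = {}" using U_iff by blast
  then show False using cl_ne by blast
qed

lemma red_props: assumes c: "cell c" and v: "v \<in> U c"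
  shows "cell (red c v) \<and> cdim (red c v) = Suc (cdim c) \<and> unred (red c v) v = c"
proof -
  have vV: "v \<in> V" "v \<noteq> s" using U_V c v U_ns by auto
  have ni: "Inr (ed v) \<notin> c" using Inr_ed_notin c v by blast
  have vin: "Inl v \<in> c" using v U_iff by blast
  have fc: "finite c" using c cell_fin by blast
  have "card c > 0" using fc vin card_gt_0_iff by blast
  then have card: "card (red c v) = card c"
    using fc ni vin by (simp add: red_def2 card_insert_if)
  have el: "\<forall>x\<in>red c v. case x of Inl v \<Rightarrow> v \<in> V | Inr e \<Rightarrow> e \<in> edges G"
    using c ed_props[OF vV] unfolding red_def2 is_cell_def by auto
  have pw: "pairwise (\<lambda>x y. cl G x \<inter> cl G y = {}) (red c v)"
  proof -
    have p0: "pairwise (\<lambda>x y. cl G x \<inter> cl G y = {}) (c - {Inl v})"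
      using c unfolding is_cell_def by (meson Diff_subset pairwise_subset)
    have "\<forall>y\<in>c - {Inl v}. cl G (Inr (ed v)) \<inter> cl G y = {}" using v U_iff by blast
    then show ?thesis unfolding red_def2 using p0 by (auto simp: pairwise_insert)
  qed
  have cr: "cell (red c v)" using fc card el pw c unfolding is_cell_def red_def2 by auto
  have "{e. Inr e \<in> red c v} = insert (ed v) {e. Inr e \<in> c}" unfolding red_def2 by auto
  moreover have "ed v \<notin> {e. Inr e \<in> c}" using ni by simp
  ultimately have "cdim (red c v) = Suc (cdim c)" unfolding cdim_def using fin_edges[OF fc] by simp
  moreover have "unred (red c v) v = c" unfolding unred_def red_def2 using ni vin by auto
  ultimately show ?thesis using cr by simp
qed

lemma unred_props: assumes c: "cell c" and e: "Inr (ed a) \<in> c" and a: "a \<in> V" "a \<noteq> s"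
  shows "cell (unred c a) \<and> a \<in> U (unred c a) \<and> cdim c = Suc (cdim (unred c a)) \<and>
    red (unred c a) a = c \<and> Inl a \<notin> c"
proof -
  have cle: "cl G (Inr (ed a)) = {a, par a}" using cl_ed a by blast
  have ni: "Inl a \<notin> c"
  proof
    assume "Inl a \<in> c"
    then have "cl G (Inl a) \<inter> cl G (Inr (ed a)) = {}" using cell_disj c e by blast
    then show False using cle by simp
  qed
  have fc: "finite c" using c cell_fin by blast
  have "card c > 0" using fc e card_gt_0_iff by blast
  then have card: "card (unred c a) = card c"
    using fc ni e by (simp add: unred_def card_insert_if)
  have el: "\<forall>x\<in>unred c a. case x of Inl v \<Rightarrow> v \<in> V | Inr e \<Rightarrow> e \<in> edges G"
    using c a unfolding unred_def is_cell_def by auto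
  have dis: "\<forall>y\<in>c - {Inr (ed a)}. cl G (Inr (ed a)) \<inter> cl G y = {}" using cell_disj c e by blast
  have pw: "pairwise (\<lambda>x y. cl G x \<inter> cl G y = {}) (unred c a)"
  proof -
    have p0: "pairwise (\<lambda>x y. cl G x \<inter> cl G y = {}) (c - {Inr (ed a)})"
      using c unfolding is_cell_def by (meson Diff_subset pairwise_subset)
    have "\<forall>y\<in>c - {Inr (ed a)}. cl G (Inl a) \<inter> cl G y = {}" using dis cle by auto
    then show ?thesis unfolding unred_def using p0 by (auto simp: pairwise_insert)
  qed
  have cu: "cell (unred c a)" using fc card el pw c unfolding is_cell_def unred_def by auto
  have aU: "a \<in> U (unred c a)" unfolding U_iff unred_def using a dis by auto
  have "{e. Inr e \<in> c} = insert (ed a) {e. Inr e \<in> unred c a}" unfolding unred_def using e by auto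
  moreover have "ed a \<notin> {e. Inr e \<in> unred c a}" by (simp add: unred_def)
  moreover have "finite {e. Inr e \<in> unred c a}" using cu cell_fin fin_edges by blast
  ultimately have "cdim c = Suc (cdim (unred c a))" unfolding cdim_def by simp
  moreover have "red (unred c a) a = c" unfolding unred_def red_def2 using ni e by auto
  ultimately show ?thesis using cu aU ni by simp
qed

lemma pr_None: "U c = {} \<Longrightarrow> principal_red G T s lab c = None"
  by (simp add: principal_red_def U_def)

lemma pr_min: assumes c: "cell c" and v: "v \<in> U c" and m: "\<forall>w\<in>U c. vl v w"
  shows "principal_red G T s lab c = Some (red c v)"
proof -
  have "(THE v. unblocked G T s c v \<and> (\<forall>w. unblocked G T s c w \<longrightarrow> vl v w)) = v"
  proof (rule the_equality)
    show "unblocked G T s c v \<and> (\<forall>w. unblocked G T s c w \<longrightarrow> vl v w)" using v m by (simp add: U_def)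
  next
    fix v' assume h: "unblocked G T s c v' \<and> (\<forall>w. unblocked G T s c w \<longrightarrow> vl v' w)"
    then have "v' \<in> U c" by (simp add: U_def)
    have "vl v' v" using h v by (simp add: U_def)
    moreover have "vl v v'" using m \<open>v' \<in> U c\<close> by blast
    ultimately show "v' = v" using v \<open>v' \<in> U c\<close> U_V[OF c] vle_antisym by blast
  qed
  then show ?thesis using v by (auto simp: principal_red_def U_def)
qed

lemma U_min: "cell c \<Longrightarrow> U c \<noteq> {} \<Longrightarrow> \<exists>v\<in>U c. \<forall>w\<in>U c. vl v w"
  using ex_min U_fin U_V by blast

lemma pr_Some: assumes c: "cell c" and p: "principal_red G T s lab c = Some \<tau>"
  shows "\<exists>v\<in>U c. (\<forall>w\<in>U c. vl v w) \<and> \<tau> = red c v"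
proof -
  have "U c \<noteq> {}" using p pr_None by force
  then obtain v where v: "v \<in> U c" "\<forall>w\<in>U c. vl v w" using U_min c by blast
  then have "\<tau> = red c v" using pr_min[OF c v] p by simp
  then show ?thesis using v by blast
qed

definition inimg :: "('v,'e) cell \<Rightarrow> bool" where
  "inimg c \<longleftrightarrow> (\<exists>c'. cell c' \<and> Suc (cdim c') = cdim c \<and> W c' = Some c)"

lemma W_eq: "W c = (if inimg c then None else principal_red G T s lab c)"
proof (cases "cdim c")
  case 0
  then show ?thesis by (simp add: Wfield_def inimg_def)
next
  case (Suc i)
  have "(\<exists>c'. is_cell G n c' \<and> cdim c' = i \<and> Wdim G n T s lab i c' = Some c) \<longleftrightarrow> inimg c"
    unfolding inimg_def Wfield_def using Suc by auto
  then show ?thesis using Suc by (simp add: Wfield_def)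
qed

lemma W_Some: assumes c: "cell c" and w: "W c = Some \<tau>"
  shows "\<not> inimg c \<and> (\<exists>v\<in>U c. (\<forall>w\<in>U c. vl v w) \<and> \<tau> = red c v)"
proof -
  have "\<not> inimg c" using w W_eq by (metis option.distinct(1))
  then show ?thesis using pr_Some[OF c] w W_eq by metis
qed


lemma U_unred_mono: assumes e: "Inr (ed a) \<in> \<rho>" and a: "a \<in> V" "a \<noteq> s"
  shows "U \<rho> \<subseteq> U (unred \<rho> a)"
proof
  fix w assume w: "w \<in> U \<rho>"
  have cle: "cl G (Inr (ed a)) = {a, par a}" using cl_ed a by blast
  have "cl G (Inr (ed w)) \<inter> cl G (Inr (ed a)) = {}" using w e U_iff by blast
  then have "cl G (Inr (ed w)) \<inter> cl G (Inl a) = {}" using cle by auto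
  then show "w \<in> U (unred \<rho> a)" using w unfolding U_iff unred_def by auto
qed

lemma U_unred_sib: assumes c: "cell \<rho>" and e: "Inr (ed a) \<in> \<rho>" and a: "a \<in> V" "a \<noteq> s"
  and w: "w \<in> U (unred \<rho> a)" and wa: "w \<noteq> a"
  shows "w \<in> U \<rho> \<or> par w = par a"
proof (rule ccontr)
  assume h: "\<not> (w \<in> U \<rho> \<or> par w = par a)"
  have wi: "Inl w \<in> \<rho>" using w wa unfolding U_iff unred_def by auto
  have wV: "w \<in> V" "w \<noteq> s" using cell_Inl[OF c wi] w U_ns by auto
  have cle: "cl G (Inr (ed a)) = {a, par a}" using cl_ed a by blast
  have clw: "cl G (Inr (ed w)) = {w, par w}" using cl_ed wV by blast
  obtain x where x: "x \<in> \<rho>" "x \<noteq> Inl w" "cl G (Inr (ed w)) \<inter> cl G x \<noteq> {}"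
    using h wi wV unfolding U_iff by blast
  have "x = Inr (ed a)"
  proof (rule ccontr)
    assume "x \<noteq> Inr (ed a)"
    then have "x \<in> unred \<rho> a" using x unfolding unred_def by auto
    then show False using w x unfolding U_iff by blast
  qed
  then have m: "{w, par w} \<inter> {a, par a} \<noteq> {}" using x cle clw by simp
  have "cl G (Inl w) \<inter> cl G (Inr (ed a)) = {}" using cell_disj[OF c wi e] by simp
  then have "w \<noteq> par a" using cle by auto
  moreover have "par w \<noteq> a"
  proof -
    have "Inl a \<in> unred \<rho> a" by (simp add: unred_def)
    then have "cl G (Inr (ed w)) \<inter> cl G (Inl a) = {}" using w wa unfolding U_iff by auto
    then show ?thesis using clw by auto
  qed
  ultimately show False using m wa h by auto
qed

lemma rank_less: assumes y: "y \<in> V" and a: "a \<in> V" and ya: "vl y a" "y \<noteq> a"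
  shows "card {w\<in>V. vl w y \<and> w \<noteq> y} < card {w\<in>V. vl w a \<and> w \<noteq> a}"
proof (rule psubset_card_mono)
  show "finite {w\<in>V. vl w a \<and> w \<noteq> a}" using finV by simp
  have "{w\<in>V. vl w y \<and> w \<noteq> y} \<subseteq> {w\<in>V. vl w a \<and> w \<noteq> a}"
  proof
    fix w assume "w \<in> {w\<in>V. vl w y \<and> w \<noteq> y}"
    then have w: "w \<in> V" "vl w y" "w \<noteq> y" by auto
    have "vl w a" using vle_trans[OF w(1) y a w(2) ya(1)] .
    moreover have "w \<noteq> a" using w ya vle_antisym y a by blast
    ultimately show "w \<in> {w\<in>V. vl w a \<and> w \<noteq> a}" using w by simp
  qed
  moreover have "y \<in> {w\<in>V. vl w a \<and> w \<noteq> a}" "y \<notin> {w\<in>V. vl w y \<and> w \<noteq> y}" using y ya by auto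
  ultimately show "{w\<in>V. vl w y \<and> w \<noteq> y} \<subset> {w\<in>V. vl w a \<and> w \<noteq> a}" by blast
qed

lemma key_lemma:
  "cell c \<Longrightarrow> Inr (ed a) \<in> c \<Longrightarrow> a \<in> V \<Longrightarrow> a \<noteq> s \<Longrightarrow> (\<forall>w\<in>U (unred c a). vl a w) \<Longrightarrow> inimg c"
proof (induction "card {w\<in>V. vl w a \<and> w \<noteq> a}" arbitrary: a rule: less_induct)
  case less
  note c = less.prems(1) and e = less.prems(2) and a = less.prems(3,4) and m = less.prems(5)
  define \<mu> where "\<mu> = unred c a"
  have up: "cell \<mu> \<and> a \<in> U \<mu> \<and> cdim c = Suc (cdim \<mu>) \<and> red \<mu> a = c \<and> Inl a \<notin> c"
    using unred_props[OF c e a] unfolding \<mu>_def by blast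
  show ?case
  proof (cases "inimg \<mu>")
    case False
    have "W \<mu> = Some c" using W_eq[of \<mu>] False pr_min[of \<mu> a] up m \<mu>_def by simp
    then show ?thesis unfolding inimg_def using up by metis
  next
    case True
    then obtain \<nu> where nu: "cell \<nu>" "Suc (cdim \<nu>) = cdim \<mu>" "W \<nu> = Some \<mu>" unfolding inimg_def by blast
    obtain y where y: "y \<in> U \<nu>" "\<forall>w\<in>U \<nu>. vl y w" "\<mu> = red \<nu> y" using W_Some[OF nu(1,3)] by blast
    have yV: "y \<in> V" "y \<noteq> s" using y U_V nu U_ns by auto
    have rp: "unred \<mu> y = \<nu>" using red_props[OF nu(1) y(1)] y(3) by simp
    have ey: "Inr (ed y) \<in> \<mu>" using y(3) by (simp add: red_def2)
    have aU: "a \<in> U \<nu>" using U_unred_mono[OF ey yV] up rp by blast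
    have ya: "vl y a" using y aU by blast
    have yna: "y \<noteq> a"
    proof
      assume "y = a"
      then have "Inl a \<in> \<mu>" by (simp add: \<mu>_def unred_def)
      then show False using y(3) \<open>y = a\<close> by (simp add: red_def2)
    qed
    have eyc: "Inr (ed y) \<in> c" using ey unfolding \<mu>_def unred_def by auto
    define \<rho> where "\<rho> = unred c y"
    have edne: "ed a \<noteq> ed y" using ed_inj a yV yna by metis
    have nu_eq: "\<nu> = unred \<rho> a" using rp edne unfolding \<rho>_def \<mu>_def unred_def by auto
    have ea: "Inr (ed a) \<in> \<rho>" using e edne unfolding \<rho>_def unred_def by auto
    have "U \<rho> \<subseteq> U \<nu>" using U_unred_mono[OF ea a] nu_eq by simp
    then have my: "\<forall>w\<in>U (unred c y). vl y w" using y(2) \<rho>_def by blast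
    have "card {w\<in>V. vl w y \<and> w \<noteq> y} < card {w\<in>V. vl w a \<and> w \<noteq> a}"
      using rank_less[OF yV(1) a(1) ya yna] .
    then show ?thesis using less.hyps[OF _ c eyc yV my] by blast
  qed
qed

lemma inimg_None: "inimg c \<Longrightarrow> W c = None" using W_eq by simp

lemma W_inj: assumes c: "cell c" and c': "cell c'" and w: "W c = Some \<tau>" and w': "W c' = Some \<tau>"
  shows "c = c'"
proof -
  obtain v where v: "v \<in> U c" "\<forall>w\<in>U c. vl v w" "\<tau> = red c v" and ni: "\<not> inimg c"
    using W_Some[OF c w] by blast
  obtain v' where v': "v' \<in> U c'" "\<forall>w\<in>U c'. vl v' w" "\<tau> = red c' v'" and ni': "\<not> inimg c'"
    using W_Some[OF c' w'] by blast
  have uc: "unred \<tau> v = c" using red_props[OF c v(1)] v(3) by simp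
  have uc': "unred \<tau> v' = c'" using red_props[OF c' v'(1)] v'(3) by simp
  show ?thesis
  proof (rule ccontr)
    assume ne: "c \<noteq> c'"
    then have vv: "v \<noteq> v'" using uc uc' by auto
    have vV: "v \<in> V" "v \<noteq> s" using v U_V c U_ns by auto
    have vV': "v' \<in> V" "v' \<noteq> s" using v' U_V c' U_ns by auto
    have edne: "ed v \<noteq> ed v'" using ed_inj vV vV' vv by metis
    have i1: "Inr (ed v') \<in> \<tau>" using v'(3) by (simp add: red_def2)
    then have "Inr (ed v') \<in> insert (Inr (ed v)) (c - {Inl v})" using v(3) by (simp add: red_def2)
    then have e1: "Inr (ed v') \<in> c" using edne by simp
    have i2: "Inr (ed v) \<in> \<tau>" using v(3) by (simp add: red_def2)
    then have "Inr (ed v) \<in> insert (Inr (ed v')) (c' - {Inl v'})" using v'(3) by (simp add: red_def2)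
    then have e2: "Inr (ed v) \<in> c'" using edne by simp
    define d where "d = unred c v'"
    have d2: "d = unred c' v" unfolding d_def
    proof -
      have "unred (unred \<tau> v) v' = unred (unred \<tau> v') v" using edne by (auto simp: unred_def)
      then show "unred c v' = unred c' v" using uc uc' by simp
    qed
    have cd: "cell d" using unred_props[OF c e1 vV'] d_def by blast
    have v'd: "v' \<in> U d" using unred_props[OF c e1 vV'] d_def by blast
    have vd: "v \<in> U d" using U_unred_mono[OF e1 vV'] v(1) d_def by blast
    obtain m where m: "m \<in> U d" "\<forall>w\<in>U d. vl m w" using U_min[OF cd] v'd by blast
    have mV: "m \<in> V" using m cd U_V by blast
    have "m \<noteq> v"
    proof
      assume "m = v"
      then have "inimg c'" using key_lemma[OF c' e2 vV] m d2 by simp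
      then show False using ni' by simp
    qed
    moreover have "m \<noteq> v'"
    proof
      assume "m = v'"
      then have "inimg c" using key_lemma[OF c e1 vV'] m d_def by simp
      then show False using ni by simp
    qed
    ultimately have mnn: "m \<noteq> v" "m \<noteq> v'" by auto
    have "m \<in> U c \<or> par m = par v'" using U_unred_sib[OF c e1 vV'] m(1) mnn d_def by blast
    moreover have "m \<notin> U c"
    proof
      assume "m \<in> U c"
      then have "vl v m" using v by blast
      moreover have "vl m v" using m vd by blast
      ultimately show False using vle_antisym vV mV mnn by blast
    qed
    ultimately have p1: "par m = par v'" by blast
    have "m \<in> U c' \<or> par m = par v" using U_unred_sib[OF c' e2 vV] m(1) mnn d2 by blast
    moreover have "m \<notin> U c'"
    proof
      assume "m \<in> U c'"
      then have "vl v' m" using v' by blast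
      moreover have "vl m v'" using m v'd by blast
      ultimately show False using vle_antisym vV' mV mnn by blast
    qed
    ultimately have p2: "par m = par v" by blast
    have ct: "cell \<tau>" using red_props[OF c v(1)] v(3) by simp
    have "cl G (Inr (ed v)) \<inter> cl G (Inr (ed v')) = {}" using cell_disj[OF ct i2 i1] edne by simp
    then show False using cl_ed vV vV' p1 p2 by auto
  qed
qed

lemma W_props: assumes c: "cell c" and w: "W c = Some \<tau>"
  shows "cell \<tau> \<and> cdim \<tau> = Suc (cdim c) \<and> regular_face G c \<tau> \<and> W \<tau> = None"
proof -
  obtain v where v: "v \<in> U c" "\<forall>w\<in>U c. vl v w" "\<tau> = red c v"
    using W_Some[OF c w] by blast
  have rp: "cell \<tau> \<and> cdim \<tau> = Suc (cdim c) \<and> unred \<tau> v = c" using red_props[OF c v(1)] v(3) by simp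
  have vV: "v \<in> V" "v \<noteq> s" using v U_V c U_ns by auto
  have ep: "ed v \<in> T" "join (ed v) v (par v)" using ed_props[OF vV] by auto
  have rf: "regular_face G c \<tau>"
    unfolding regular_face_def
  proof (intro exI conjI bexI)
    show "Inr (ed v) \<in> \<tau>" using v(3) by (simp add: red_def2)
    show "src G (ed v) \<noteq> tgt G (ed v)" using no_loop ep by blast
    show "c = insert (Inl v) (\<tau> - {Inr (ed v)})" using rp by (simp add: unred_def)
    show "v \<in> {src G (ed v), tgt G (ed v)}" using ep by (auto simp: join_def)
  qed
  have "inimg \<tau>" unfolding inimg_def using c rp w by metis
  then show ?thesis using rp rf inimg_None by simp
qed


definition phi :: "'v + 'e \<Rightarrow> int" where
  "phi x = (case x of Inl w \<Rightarrow> 2 * int (dep w)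
     | Inr f \<Rightarrow> (if f \<in> T then int (dep (src G f)) + int (dep (tgt G f)) else 2 * int (card V)))"
definition Phi :: "('v,'e) cell \<Rightarrow> int" where "Phi c = (\<Sum>x\<in>c. phi x)"

lemma phi_ed: assumes "x \<in> V" "x \<noteq> s" shows "phi (Inr (ed x)) = 2 * int (dep x) - 1"
proof -
  have ep: "ed x \<in> T" "join (ed x) x (par x)" using ed_props[OF assms] by auto
  have "int (dep (src G (ed x))) + int (dep (tgt G (ed x))) = int (dep x) + int (dep (par x))"
    using ep(2) by (auto simp: join_def)
  then show ?thesis using ep(1) dep_par[OF assms] by (simp add: phi_def)
qed

lemma Phi_insert: "finite c \<Longrightarrow> x \<notin> c \<Longrightarrow> Phi (insert x c) = phi x + Phi c"
  by (simp add: Phi_def)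
lemma Phi_remove: "finite c \<Longrightarrow> x \<in> c \<Longrightarrow> Phi (c - {x}) = Phi c - phi x"
  by (simp add: Phi_def sum_diff1)

lemma Phi_red: assumes c: "cell c" and v: "v \<in> U c" shows "Phi (red c v) = Phi c - 1"
proof -
  have vV: "v \<in> V" "v \<noteq> s" using v U_V c U_ns by auto
  have fc: "finite c" using c cell_fin by blast
  have ni: "Inr (ed v) \<notin> c - {Inl v}" using Inr_ed_notin c v by blast
  have vi: "Inl v \<in> c" using v U_iff by blast
  have "Phi (red c v) = phi (Inr (ed v)) + Phi (c - {Inl v})"
    unfolding red_def2 using Phi_insert fc ni by blast
  also have "\<dots> = phi (Inr (ed v)) + Phi c - phi (Inl v)" using Phi_remove fc vi by simp
  finally show ?thesis using phi_ed[OF vV] by (simp add: phi_def)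
qed

lemma face_step:
  assumes c: "cell c" and v: "v \<in> U c" and c2: "cell c2" and dim: "cdim c2 = cdim c"
    and fa: "face G c2 (red c v)" and ne: "c2 \<noteq> c"
  shows "Phi c2 \<le> Phi c \<and> (Phi c2 = Phi c \<longrightarrow> (\<exists>x. x \<in> V \<and> x \<noteq> s \<and> x \<noteq> v \<and> Inr (ed x) \<in> c \<and>
           c2 = insert (Inl x) (red c v - {Inr (ed x)})))"
proof -
  define \<tau> where "\<tau> = red c v"
  have rp: "cell \<tau> \<and> cdim \<tau> = Suc (cdim c) \<and> unred \<tau> v = c" using red_props[OF c v] \<tau>_def by simp
  have ft: "finite \<tau>" using rp cell_fin by blast
  obtain g where g: "\<forall>x\<in>\<tau>. case x of Inl w \<Rightarrow> g x = x | Inr e \<Rightarrow> g x \<in> {x, Inl (src G e), Inl (tgt G e)}"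
    and c2g: "c2 = g ` \<tau>" using fa unfolding face_def \<tau>_def by blast
  have gl: "\<And>w. Inl w \<in> \<tau> \<Longrightarrow> g (Inl w) = Inl w" using g by force
  have gr: "\<And>e. Inr e \<in> \<tau> \<Longrightarrow> g (Inr e) \<in> {Inr e, Inl (src G e), Inl (tgt G e)}" using g by force
  have "card (g ` \<tau>) = card \<tau>" using c2 rp c2g unfolding is_cell_def by simp
  then have inj: "inj_on g \<tau>" using eq_card_imp_inj_on ft by blast
  define M where "M = {e. Inr e \<in> \<tau> \<and> g (Inr e) \<noteq> Inr e}"
  have Ec2: "{e. Inr e \<in> c2} = {e. Inr e \<in> \<tau> \<and> g (Inr e) = Inr e}"
  proof (intro set_eqI iffI)
    fix e assume "e \<in> {e. Inr e \<in> c2}"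
    then obtain x where x: "x \<in> \<tau>" "g x = Inr e" using c2g by auto
    show "e \<in> {e. Inr e \<in> \<tau> \<and> g (Inr e) = Inr e}"
    proof (cases x)
      case (Inl w) then show ?thesis using x gl by auto
    next
      case (Inr e') then show ?thesis using x gr[of e'] by auto
    qed
  next
    fix e assume "e \<in> {e. Inr e \<in> \<tau> \<and> g (Inr e) = Inr e}"
    then show "e \<in> {e. Inr e \<in> c2}" using c2g by (auto intro: rev_image_eqI)
  qed
  have fE: "finite {e. Inr e \<in> \<tau>}" using fin_edges ft by blast
  have split: "{e. Inr e \<in> \<tau>} = {e. Inr e \<in> c2} \<union> M" "{e. Inr e \<in> c2} \<inter> M = {}"
    unfolding Ec2 M_def by auto
  have "card {e. Inr e \<in> \<tau>} = card {e. Inr e \<in> c2} + card M"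
    using split fE by (metis card_Un_disjoint finite_Un)
  then have "card M = 1" using rp dim unfolding cdim_def by simp
  then obtain f where M: "M = {f}" using card_1_singletonE by blast
  have fi: "Inr f \<in> \<tau>" "g (Inr f) \<noteq> Inr f" using M unfolding M_def by auto
  obtain u where u: "g (Inr f) = Inl u" "u \<in> {src G f, tgt G f}" using gr[OF fi(1)] fi(2) by auto
  have gfix: "\<And>x. x \<in> \<tau> - {Inr f} \<Longrightarrow> g x = x"
  proof -
    fix x assume x: "x \<in> \<tau> - {Inr f}"
    show "g x = x"
    proof (cases x)
      case (Inl w) then show ?thesis using x gl by auto
    next
      case (Inr e)
      then have "e \<notin> M" using x M by auto
      then show ?thesis using x Inr unfolding M_def by auto
    qed
  qed
  have "g ` \<tau> = insert (g (Inr f)) (g ` (\<tau> - {Inr f}))" using fi(1) by blast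
  moreover have "g ` (\<tau> - {Inr f}) = \<tau> - {Inr f}" using gfix by (simp add: image_cong)
  ultimately have c2e: "c2 = insert (Inl u) (\<tau> - {Inr f})" using c2g u by simp
  have uni: "Inl u \<notin> \<tau> - {Inr f}"
  proof
    assume h: "Inl u \<in> \<tau> - {Inr f}"
    then have "g (Inl u) = g (Inr f)" using gfix u by simp
    then show False using inj h fi(1) unfolding inj_on_def by blast
  qed
  have Pc2: "Phi c2 = phi (Inl u) + Phi \<tau> - phi (Inr f)"
    using c2e Phi_insert[OF _ uni] Phi_remove[OF ft fi(1)] ft by simp
  have Pt: "Phi \<tau> = Phi c - 1" using Phi_red[OF c v] \<tau>_def by simp
  have fE2: "f \<in> edges G" using cell_Inr rp fi(1) by blast
  have uV: "u \<in> V" using u edge_verts[OF fE2] by auto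
  show ?thesis
  proof (cases "f \<in> T")
    case False
    have "phi (Inr f) = 2 * int (card V)" using False by (simp add: phi_def)
    moreover have "phi (Inl u) < 2 * int (card V)" using dep_lt[OF uV] by (simp add: phi_def)
    ultimately show ?thesis using Pc2 Pt by simp
  next
    case True
    obtain x where x: "x \<in> V" "x \<noteq> s" "ed x = f" using ed_surj[OF True] by blast
    have ux: "u = x \<or> u = par x" using u ed_props[OF x(1,2)] x(3) by (auto simp: join_def)
    have pf: "phi (Inr f) = 2 * int (dep x) - 1" using phi_ed[OF x(1,2)] x(3) by simp
    show ?thesis
    proof (cases "u = x")
      case False
      then have "u = par x" using ux by simp
      then have "phi (Inl u) = 2 * int (dep x) - 2" using dep_par[OF x(1,2)] by (simp add: phi_def)
      then show ?thesis using Pc2 Pt pf by simp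
    next
      case True
      have eq: "Phi c2 = Phi c" using Pc2 Pt pf True by (simp add: phi_def)
      have xv: "x \<noteq> v"
      proof
        assume "x = v"
        then have "c2 = unred \<tau> v" using c2e True x(3) by (simp add: unred_def)
        then show False using rp ne by simp
      qed
      have "ed x \<noteq> ed v" using ed_inj x xv v U_V c U_ns by blast
      then have "Inr (ed x) \<in> c" using fi(1) x(3) unfolding \<tau>_def red_def2 by auto
      moreover have "c2 = insert (Inl x) (red c v - {Inr (ed x)})" using c2e True x(3) \<tau>_def by simp
      ultimately show ?thesis using eq x xv by auto
    qed
  qed
qed

lemma swap_U: assumes c: "cell c" and v: "v \<in> U c" and e: "Inr (ed a) \<in> c" and a: "a \<in> V" "a \<noteq> s"
  and av: "a \<noteq> v" and w: "w \<in> U (unred c a)" and wa: "w \<noteq> a" and wn: "w \<notin> U c" and pw: "par w = par a"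
  shows "w \<in> U (insert (Inl a) (red c v - {Inr (ed a)}))"
proof -
  have wi: "Inl w \<in> c" using w wa unfolding U_iff unred_def by auto
  have wV: "w \<in> V" "w \<noteq> s" using cell_Inl[OF c wi] w U_ns by auto
  have wv: "w \<noteq> v" using v wn by blast
  have vV: "v \<in> V" "v \<noteq> s" using v U_V c U_ns by auto
  have vi: "Inl v \<in> c" using v U_iff by blast
  have clw: "cl G (Inr (ed w)) = {w, par w}" using cl_ed wV by blast
  have clv: "cl G (Inr (ed v)) = {v, par v}" using cl_ed vV by blast
  have cla: "cl G (Inr (ed a)) = {a, par a}" using cl_ed a by blast
  have d1: "cl G (Inr (ed w)) \<inter> cl G (Inl a) = {}"
  proof -
    have "Inl a \<in> unred c a" by (simp add: unred_def)
    then show ?thesis using w wa unfolding U_iff by auto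
  qed
  have d2: "cl G (Inr (ed w)) \<inter> cl G (Inr (ed v)) = {}"
  proof -
    have "cl G (Inr (ed v)) \<inter> cl G (Inl w) = {}" using v wi wv unfolding U_iff by auto
    then have x1: "w \<noteq> par v" using clv by auto
    have "Inl v \<in> unred c a" using vi by (simp add: unred_def)
    then have "cl G (Inr (ed w)) \<inter> cl G (Inl v) = {}" using w wv unfolding U_iff by auto
    then have x2: "par w \<noteq> v" using clw by auto
    have "cl G (Inr (ed v)) \<inter> cl G (Inr (ed a)) = {}" using v e unfolding U_iff by auto
    then have x3: "par a \<noteq> par v" using clv cla by auto
    show ?thesis using clw clv x1 x2 x3 wv pw by auto
  qed
  have d3: "\<forall>x\<in>c - {Inl v} - {Inr (ed a)}. x \<noteq> Inl w \<longrightarrow> cl G (Inr (ed w)) \<inter> cl G x = {}"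
    using w unfolding U_iff unred_def by auto
  show ?thesis unfolding U_iff red_def2 using wi wv wV d1 d2 d3 by auto
qed

lemma ivt: "P m \<Longrightarrow> \<not> P k \<Longrightarrow> m \<le> k \<Longrightarrow> \<exists>j. m \<le> j \<and> j < k \<and> P j \<and> \<not> P (Suc j)"
proof (induction k)
  case 0 then show ?case by simp
next
  case (Suc k)
  show ?case
  proof (cases "P k")
    case True
    then have "m \<le> k" using Suc.prems by (metis le_SucE)
    then show ?thesis using True Suc.prems by auto
  next
    case False
    then have "m \<le> k" using Suc.prems by (metis le_SucE)
    then show ?thesis using Suc.IH[OF Suc.prems(1) False] by auto
  qed
qed


lemma no_ncp: "\<not> has_nonstationary_closed_path G n W"
proof
  assume "has_nonstationary_closed_path G n W"
  then obtain \<sigma> :: "nat \<Rightarrow> ('v,'e) cell" and r p where r: "0 < r"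
    and cells: "\<forall>i\<le>r. cell (\<sigma> i) \<and> cdim (\<sigma> i) = p"
    and clo: "\<sigma> r = \<sigma> 0" and ns: "\<sigma> 1 \<noteq> \<sigma> 0"
    and st: "\<forall>i<r. (W (\<sigma> i) = None \<longrightarrow> \<sigma> (Suc i) = \<sigma> i) \<and>
               (\<forall>\<tau>. W (\<sigma> i) = Some \<tau> \<longrightarrow> \<sigma> (Suc i) \<noteq> \<sigma> i \<and> face G (\<sigma> (Suc i)) \<tau>)"
    unfolding has_nonstationary_closed_path_def by blast
  define S where "S i = \<sigma> (i mod r)" for i
  have Sc: "cell (S i) \<and> cdim (S i) = p" for i using cells r unfolding S_def
    by (meson less_imp_le_nat mod_less_divisor)
  have Sper: "S (i + r) = S i" for i unfolding S_def by simp
  have Smod: "S (i mod r) = S i" for i unfolding S_def by simp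
  have SSuc: "S (Suc i) = \<sigma> (Suc (i mod r))" for i
  proof (cases "Suc (i mod r) = r")
    case True then show ?thesis unfolding S_def using clo by (simp add: mod_Suc)
  next
    case False then show ?thesis unfolding S_def by (simp add: mod_Suc)
  qed
  have Sst: "(W (S i) = None \<longrightarrow> S (Suc i) = S i) \<and>
      (\<forall>\<tau>. W (S i) = Some \<tau> \<longrightarrow> S (Suc i) \<noteq> S i \<and> face G (S (Suc i)) \<tau>)" for i
    using st[rule_format, of "i mod r"] r SSuc unfolding S_def by simp
  have S0: "S 0 = \<sigma> 0" unfolding S_def by simp
  have Wd: "W (S i) \<noteq> None" for i
  proof
    assume N: "W (S i) = None"
    have "S (i + k) = S i" for k
    proof (induction k)
      case 0 then show ?case by simp
    next
      case (Suc k)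
      then have "W (S (i + k)) = None" using N by simp
      then show ?case using Sst[of "i + k"] Suc by simp
    qed
    moreover have "(i + (r * Suc i - i)) mod r = 0"
    proof -
      have "i \<le> r * Suc i" using r by (metis le_add1 mult_Suc_right mult_le_mono1 nat_mult_1 Suc_leI add.commute le_trans)
      then have "i + (r * Suc i - i) = r * Suc i" by simp
      then show ?thesis by simp
    qed
    ultimately have "S 0 = S i" using Smod by metis
    then have "W (\<sigma> 0) = None" using N S0 by simp
    then have "\<sigma> 1 = \<sigma> 0" using st r by auto
    then show False using ns by simp
  qed
  have data: "\<exists>v. v \<in> U (S i) \<and> (\<forall>w\<in>U (S i). vl v w) \<and> W (S i) = Some (red (S i) v)" for i
  proof -
    obtain \<tau> where t: "W (S i) = Some \<tau>" using Wd by blast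
    then show ?thesis using W_Some[OF _ t] Sc by blast
  qed
  then obtain vm where vm: "\<And>i. vm i \<in> U (S i) \<and> (\<forall>w\<in>U (S i). vl (vm i) w) \<and> W (S i) = Some (red (S i) (vm i))"
    by metis
  have face_i: "S (Suc i) \<noteq> S i \<and> face G (S (Suc i)) (red (S i) (vm i))" for i
    using Sst[of i] vm[of i] by blast
  have fs: "Phi (S (Suc i)) \<le> Phi (S i) \<and> (Phi (S (Suc i)) = Phi (S i) \<longrightarrow> (\<exists>x. x \<in> V \<and> x \<noteq> s \<and> x \<noteq> vm i \<and> Inr (ed x) \<in> S i \<and>
           S (Suc i) = insert (Inl x) (red (S i) (vm i) - {Inr (ed x)})))" for i
    using face_step[of "S i" "vm i" "S (Suc i)"] Sc vm face_i by metis
  have PhiEq: "Phi (S (Suc i)) = Phi (S i)" for i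
  proof -
    have mono: "\<And>k. Phi (S (Suc k)) \<le> Phi (S k)" using fs by blast
    have "Suc i \<le> i + r" using r by simp
    then have "Phi (S (i + r)) \<le> Phi (S (Suc i))" using lift_Suc_antimono_le[of "\<lambda>k. Phi (S k)"] mono by blast
    then show ?thesis using Sper mono[of i] by simp
  qed
  then obtain xm where xm: "\<And>i. xm i \<in> V \<and> xm i \<noteq> s \<and> xm i \<noteq> vm i \<and> Inr (ed (xm i)) \<in> S i \<and>
           S (Suc i) = insert (Inl (xm i)) (red (S i) (vm i) - {Inr (ed (xm i))})"
    using fs by metis
  have vmV: "vm i \<in> V" "vm i \<noteq> s" for i using vm[of i] Sc U_V U_ns by blast+
  have vm_mod: "vm (i mod r) = vm i" for i
  proof -
    have "vm (i mod r) \<in> U (S i)" "\<forall>w\<in>U (S i). vl (vm (i mod r)) w" using vm[of "i mod r"] Smod by auto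
    then show ?thesis using vm[of i] vle_antisym vmV by blast
  qed
  obtain a where a: "a \<in> vm ` {..<r}" "\<forall>w\<in>vm ` {..<r}. vl a w"
    using ex_min[of "vm ` {..<r}"] r vmV by blast
  obtain i0 where i0: "i0 < r" "a = vm i0" using a by blast
  have amin: "vl a (vm i)" for i
  proof -
    have "i mod r < r" using r by simp
    then show ?thesis using a vm_mod by (metis lessThan_iff rev_image_eqI)
  qed
  have aV: "a \<in> V" "a \<noteq> s" using vmV i0 by auto
  have in1: "Inr (ed a) \<in> S (Suc i0)"
  proof -
    have "ed (xm i0) \<noteq> ed a" using ed_inj xm[of i0] aV i0 by metis
    then show ?thesis using xm[of i0] i0 by (simp add: red_def2)
  qed
  have out: "Inr (ed a) \<notin> S (i0 + r)"
    using Sper Inr_ed_notin Sc vm i0 by metis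
  obtain j where j: "Suc i0 \<le> j" "j < i0 + r" "Inr (ed a) \<in> S j" "Inr (ed a) \<notin> S (Suc j)"
    using ivt[of "\<lambda>k. Inr (ed a) \<in> S k", OF in1 out] r by auto
  define c where "c = S j"
  define v where "v = vm j"
  have cc: "cell c" using Sc c_def by blast
  have vU: "v \<in> U c" "\<forall>w\<in>U c. vl v w" using vm[of j] c_def v_def by auto
  have ec: "Inr (ed a) \<in> c" using j c_def by simp
  have xa: "xm j = a"
  proof (rule ccontr)
    assume "xm j \<noteq> a"
    then have "ed (xm j) \<noteq> ed a" using ed_inj xm[of j] aV by metis
    then have "Inr (ed a) \<in> S (Suc j)" using xm[of j] ec c_def by (auto simp: red_def2)
    then show False using j by simp
  qed
  have av: "a \<noteq> v" using xm[of j] xa v_def by simp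
  have Sn: "S (Suc j) = insert (Inl a) (red c v - {Inr (ed a)})" using xm[of j] xa c_def v_def by simp
  have "\<forall>w\<in>U (unred c a). vl a w"
  proof
    fix w assume w: "w \<in> U (unred c a)"
    have uc: "cell (unred c a)" using unred_props[OF cc ec aV] by blast
    have wV: "w \<in> V" using w U_V uc by blast
    show "vl a w"
    proof (cases "w = a")
      case True then show ?thesis using vle_refl aV by simp
    next
      case wa: False
      show ?thesis
      proof (cases "w \<in> U c")
        case True
        then have "vl v w" using vU by blast
        moreover have "vl a v" using amin v_def by simp
        ultimately show ?thesis using vle_trans aV vmV v_def wV by blast
      next
        case False
        then have "par w = par a" using U_unred_sib[OF cc ec aV w wa] by blast
        then have "w \<in> U (S (Suc j))" using swap_U[OF cc vU(1) ec aV av w wa False] Sn by simp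
        then have "vl (vm (Suc j)) w" using vm by blast
        moreover have "vl a (vm (Suc j))" using amin by simp
        ultimately show ?thesis using vle_trans aV vmV wV by blast
      qed
    qed
  qed
  then have "inimg c" using key_lemma[OF cc ec aV] by blast
  then have "W c = None" by (rule inimg_None)
  then show False using Wd c_def by simp
qed

lemma dgvf: "discrete_gradient_vector_field G n W"
  unfolding discrete_gradient_vector_field_def
  using W_props W_inj no_ncp by blast

end

theorem mainTheorem9:
  fixes G :: "('v,'e) graph" and n :: nat and T :: "'e set" and s :: 'v
    and lab :: "'v \<Rightarrow> 'e \<times> bool \<Rightarrow> nat"
  assumes "wf_graph G" and "connected_graph G" and "1 \<le> n"
    and "spanning_tree G T" and "s \<in> verts G" and "tdegree G T s = 1"
    and "good_labelling G T s lab"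
  shows "\<not> has_nonstationary_closed_path G n (Wfield G n T s lab) \<and>
         discrete_gradient_vector_field G n (Wfield G n T s lab)"
proof -
  interpret tctx G n T s lab using assms by (unfold_locales)
  show ?thesis using no_ncp dgvf by blast
qed

end
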